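(* For every finite sequence of primes $p_1,\dots,p_h$ there is a finite solvable algebra $\mathbf A$ with a Malcev term such that $\mathsf{nuDet}_{p_1}\circ\cdots\circ\mathsf{nuDet}_{p_h}\subseteq\mathrm{nuP}_{\mathbf A}$.
   Context: A finite algebra has finite universe and finitely many basic operations. An $n$-ary circuit over $\mathbf A$ is a DAG with one output node, sources labelled by variables or constants from $A$, gates labelled by basic operations; size is nodes plus edges. A NuDFA over $\mathbf A$ is $(\{t_n\}_{n\ge1},\iota,S)$ with $t_n$ an $n$-ary circuit, $\iota:\{0,1\}\to A$, $S\subseteq A$, accepting $b\in\{0,1\}^n$ iff $t_n(\iota(b_1),\dots,\iota(b_n))\in S$; polynomial size means size of $t_n$ polynomial in $n$; $\mathrm{nuP}_{\mathbf A}$ is the class of languages over $\{0,1\}$ accepted by polynomial-size NuDFAs over $\mathbf A$. A Malcev term is a ternary term $d$ with $d(x,y,y)=d(y,y,x)=x$; solvability is in the sense of commutator theory. An ABP over $\mathrm{GF}(p)$ is a directed acyclic multigraph with one source and one sink, edges labelled by variables or constants of $\mathrm{GF}(p)$; it computes the sum over source–sink paths of the products of labels; size is vertices plus edges. A $\mathrm{BABP}_p$ gate is labelled by an ABP over $\mathrm{GF}(p)$ and $T\subseteq\mathrm{GF}(p)$ and outputs 1 on Boolean inputs iff the polynomial value lies in $T$; its size is the ABP's size. $\mathsf{nuDet}_{p_1}\circ\cdots\circ\mathsf{nuDet}_{p_h}$ is the class of languages $L$ such that for each $n$, $L\cap\{0,1\}^n$ is recognized by a layered circuit whose top layer is a single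 $\mathrm{BABP}_{p_1}$ gate, whose layer $i$ consists of $\mathrm{BABP}_{p_i}$ gates fed by layer $i+1$, and whose bottom layer of $\mathrm{BABP}_{p_h}$ gates reads the input bits, of total size (edges plus gate sizes) polynomial in $n$. *)

theory Defs
  imports Main "HOL-Computational_Algebra.Primes"
begin

record 'a algebra =
  alg_carrier :: "'a set"
  alg_ops :: "(nat \<times> ('a list \<Rightarrow> 'a)) list"

definition finite_algebra :: "'a algebra \<Rightarrow> bool" where
  "finite_algebra A \<longleftrightarrow> finite (alg_carrier A) \<and> alg_carrier A \<noteq> {} \<and>
     (\<forall>(k, f) \<in> set (alg_ops A). \<forall>xs. length xs = k \<and> set xs \<subseteq> alg_carrier A
        \<longrightarrow> f xs \<in> alg_carrier A)"

datatype 'v trm = TVar 'v | TOp nat "'v trm list"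

fun wf_trm :: "'a algebra \<Rightarrow> 'v trm \<Rightarrow> bool" where
  "wf_trm A (TVar v) = True"
| "wf_trm A (TOp f ts) = (f < length (alg_ops A) \<and> length ts = fst (alg_ops A ! f)
      \<and> (\<forall>t \<in> set ts. wf_trm A t))"

fun trm_vars :: "'v trm \<Rightarrow> 'v set" where
  "trm_vars (TVar v) = {v}"
| "trm_vars (TOp f ts) = (\<Union>t \<in> set ts. trm_vars t)"

fun teval :: "'a algebra \<Rightarrow> ('v \<Rightarrow> 'a) \<Rightarrow> 'v trm \<Rightarrow> 'a" where
  "teval A e (TVar v) = e v"
| "teval A e (TOp f ts) = snd (alg_ops A ! f) (map (teval A e) ts)"

definition env3 :: "'a \<Rightarrow> 'a \<Rightarrow> 'a \<Rightarrow> nat \<Rightarrow> 'a" where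
  "env3 x y z i = (if i = 0 then x else if i = 1 then y else z)"

definition has_malcev :: "'a algebra \<Rightarrow> bool" where
  "has_malcev A \<longleftrightarrow> (\<exists>d :: nat trm. wf_trm A d \<and> trm_vars d \<subseteq> {0, 1, 2} \<and>
     (\<forall>x \<in> alg_carrier A. \<forall>y \<in> alg_carrier A.
        teval A (env3 x y y) d = x \<and> teval A (env3 y y x) d = x))"

definition is_cong :: "'a algebra \<Rightarrow> ('a \<times> 'a) set \<Rightarrow> bool" where
  "is_cong A \<theta> \<longleftrightarrow> equiv (alg_carrier A) \<theta> \<and>
     (\<forall>(k, f) \<in> set (alg_ops A). \<forall>xs ys. length xs = k \<and> length ys = k \<and>
        list_all2 (\<lambda>x y. (x, y) \<in> \<theta>) xs ys \<longrightarrow> (f xs, f ys) \<in> \<theta>)"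

text \<open>Variables \<open>Inl i\<close> are the x's, \<open>Inr j\<close> the y's.\<close>
definition centralizes :: "'a algebra \<Rightarrow> ('a \<times> 'a) set \<Rightarrow> ('a \<times> 'a) set \<Rightarrow> ('a \<times> 'a) set \<Rightarrow> bool" where
  "centralizes A \<alpha> \<beta> \<delta> \<longleftrightarrow>
     (\<forall>t :: (nat + nat) trm. wf_trm A t \<longrightarrow>
       (\<forall>a b c d. (\<forall>i. (a i, b i) \<in> \<alpha>) \<and> (\<forall>j. (c j, d j) \<in> \<beta>) \<longrightarrow>
          (teval A (case_sum a c) t, teval A (case_sum a d) t) \<in> \<delta> \<longrightarrow>
          (teval A (case_sum b c) t, teval A (case_sum b d) t) \<in> \<delta>))"

definition commutator :: "'a algebra \<Rightarrow> ('a \<times> 'a) set \<Rightarrow> ('a \<times> 'a) set \<Rightarrow> ('a \<times> 'a) set" where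
  "commutator A \<alpha> \<beta> = \<Inter> {\<delta>. is_cong A \<delta> \<and> centralizes A \<alpha> \<beta> \<delta>}"

fun derived :: "'a algebra \<Rightarrow> nat \<Rightarrow> ('a \<times> 'a) set" where
  "derived A 0 = alg_carrier A \<times> alg_carrier A"
| "derived A (Suc n) = commutator A (derived A n) (derived A n)"

definition solvable_alg :: "'a algebra \<Rightarrow> bool" where
  "solvable_alg A \<longleftrightarrow> (\<exists>n. derived A n = Id_on (alg_carrier A))"

text \<open>A circuit is a list of nodes in topological order; gate children are
  indices of earlier nodes (edges, with multiplicity and order); the output
  node is the last node. Inputs are numbered 0..n-1.\<close>
datatype 'a cnode = CIn nat | CConst 'a | CGate nat "nat list"

definition wf_circ :: "'a algebra \<Rightarrow> nat \<Rightarrow> 'a cnode list \<Rightarrow> bool" where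
  "wf_circ A n C \<longleftrightarrow> C \<noteq> [] \<and> (\<forall>i < length C. case C ! i of
      CIn j \<Rightarrow> j < n
    | CConst c \<Rightarrow> c \<in> alg_carrier A
    | CGate f cs \<Rightarrow> f < length (alg_ops A) \<and> length cs = fst (alg_ops A ! f)
                     \<and> (\<forall>j \<in> set cs. j < i))"

fun cnode_edges :: "'a cnode \<Rightarrow> nat" where
  "cnode_edges (CGate f cs) = length cs"
| "cnode_edges _ = 0"

definition circ_size :: "'a cnode list \<Rightarrow> nat" where
  "circ_size C = length C + sum_list (map cnode_edges C)"

fun cnode_val :: "'a algebra \<Rightarrow> (nat \<Rightarrow> 'a) \<Rightarrow> 'a list \<Rightarrow> 'a cnode \<Rightarrow> 'a" where
  "cnode_val A inp acc (CIn j) = inp j"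
| "cnode_val A inp acc (CConst c) = c"
| "cnode_val A inp acc (CGate f cs) = snd (alg_ops A ! f) (map (\<lambda>j. acc ! j) cs)"

fun cvals :: "'a algebra \<Rightarrow> (nat \<Rightarrow> 'a) \<Rightarrow> 'a list \<Rightarrow> 'a cnode list \<Rightarrow> 'a list" where
  "cvals A inp acc [] = acc"
| "cvals A inp acc (c # cs) = cvals A inp (acc @ [cnode_val A inp acc c]) cs"

definition circ_eval :: "'a algebra \<Rightarrow> (nat \<Rightarrow> 'a) \<Rightarrow> 'a cnode list \<Rightarrow> 'a" where
  "circ_eval A inp C = last (cvals A inp [] C)"

text \<open>nuP_A: languages accepted by polynomial-size NuDFAs over A
  (words of length n \<ge> 1; the empty word is not constrained).\<close>
definition nuP :: "'a algebra \<Rightarrow> bool list set set" where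
  "nuP A = {L. \<exists>(t :: nat \<Rightarrow> 'a cnode list) (\<iota> :: bool \<Rightarrow> 'a) S (c :: nat) (k :: nat).
      range \<iota> \<subseteq> alg_carrier A \<and> S \<subseteq> alg_carrier A \<and>
      (\<forall>n \<ge> 1. wf_circ A n (t n) \<and> circ_size (t n) \<le> c * n ^ k + c) \<and>
      (\<forall>b. length b \<ge> 1 \<longrightarrow>
         (b \<in> L \<longleftrightarrow> circ_eval A (\<lambda>i. \<iota> (b ! i)) (t (length b)) \<in> S))}"

text \<open>GF(p) is represented by the integers {0..<p}, arithmetic mod p.\<close>
datatype lab = LVar nat | LConst int

text \<open>An ABP: vertices 0..nv-1 (topologically numbered, so acyclic), source 0,
  sink nv-1, a list of labelled edges (u, v, label) (a multigraph).\<close>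
definition abp_wf :: "nat \<Rightarrow> nat \<Rightarrow> (nat \<times> nat \<times> lab) list \<Rightarrow> nat \<Rightarrow> bool" where
  "abp_wf p nv E nvars \<longleftrightarrow> nv \<ge> 1 \<and> (\<forall>(u, v, l) \<in> set E. u < v \<and> v < nv \<and>
     (case l of LVar j \<Rightarrow> j < nvars | LConst c \<Rightarrow> 0 \<le> c \<and> c < int p))"

fun is_path :: "(nat \<times> nat \<times> lab) list \<Rightarrow> nat \<Rightarrow> nat \<Rightarrow> nat list \<Rightarrow> bool" where
  "is_path E s t [] = (s = t)"
| "is_path E s t (i # is) = (i < length E \<and> fst (E ! i) = s \<and> is_path E (fst (snd (E ! i))) t is)"

fun lab_val :: "(nat \<Rightarrow> int) \<Rightarrow> lab \<Rightarrow> int" where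
  "lab_val x (LVar j) = x j"
| "lab_val x (LConst c) = c"

definition abp_val :: "nat \<Rightarrow> nat \<Rightarrow> (nat \<times> nat \<times> lab) list \<Rightarrow> (nat \<Rightarrow> int) \<Rightarrow> int" where
  "abp_val p nv E x = (\<Sum>ps \<in> {ps. length ps \<le> length E \<and> is_path E 0 (nv - 1) ps}.
      prod_list (map (\<lambda>i. lab_val x (snd (snd (E ! i)))) ps)) mod int p"

text \<open>A BABP_p gate: an ABP, an accepting set T, and its input wires
  (ABP variable j reads the wire \<open>wires ! j\<close> from the layer below / input).\<close>
record babp_gate =
  g_nv :: nat
  g_E :: "(nat \<times> nat \<times> lab) list"
  g_T :: "int set"
  g_wires :: "nat list"

definition gate_wf :: "nat \<Rightarrow> nat \<Rightarrow> babp_gate \<Rightarrow> bool" where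
  "gate_wf p m g \<longleftrightarrow> abp_wf p (g_nv g) (g_E g) (length (g_wires g)) \<and>
     g_T g \<subseteq> {0..<int p} \<and> (\<forall>w \<in> set (g_wires g). w < m)"

definition gate_size :: "babp_gate \<Rightarrow> nat" where
  "gate_size g = g_nv g + length (g_E g)"

definition gate_out :: "nat \<Rightarrow> babp_gate \<Rightarrow> bool list \<Rightarrow> bool" where
  "gate_out p g y \<longleftrightarrow>
     abp_val p (g_nv g) (g_E g) (\<lambda>j. if y ! (g_wires g ! j) then 1 else 0) \<in> g_T g"

text \<open>Layered circuit: list of layers, top (layer 1, prime p_1) first,
  bottom (layer h, prime p_h) last, reading the n input bits.\<close>
fun layers_wf :: "nat list \<Rightarrow> babp_gate list list \<Rightarrow> nat \<Rightarrow> bool" where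
  "layers_wf [] [] n = True"
| "layers_wf (p # ps) (L # Ls) n =
     ((\<forall>g \<in> set L. gate_wf p (if Ls = [] then n else length (hd Ls)) g) \<and> layers_wf ps Ls n)"
| "layers_wf _ _ n = False"

fun layers_eval :: "nat list \<Rightarrow> babp_gate list list \<Rightarrow> bool list \<Rightarrow> bool list" where
  "layers_eval (p # ps) (L # Ls) x =
     map (\<lambda>g. gate_out p g (if Ls = [] then x else layers_eval ps Ls x)) L"
| "layers_eval _ _ x = x"

definition layers_size :: "babp_gate list list \<Rightarrow> nat" where
  "layers_size Ls = (\<Sum>L \<leftarrow> Ls. \<Sum>g \<leftarrow> L. length (g_wires g) + gate_size g)"

definition nuDet :: "nat list \<Rightarrow> bool list set set" where
  "nuDet ps = {L. \<exists>(C :: nat \<Rightarrow> babp_gate list list) (c :: nat) (k :: nat).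
      \<forall>n. C n \<noteq> [] \<and> length (hd (C n)) = 1 \<and> layers_wf ps (C n) n \<and>
          layers_size (C n) \<le> c * n ^ k + c \<and>
          (\<forall>x. length x = n \<longrightarrow> (x \<in> L \<longleftrightarrow> hd (layers_eval ps (C n) x)))}"

end

theory Submission
  imports Defs "HOL-Library.Countable"
begin

definition enc :: "int list \<Rightarrow> nat" where "enc = to_nat"
definition dec :: "nat \<Rightarrow> int list" where "dec = from_nat"
definition dig :: "nat \<Rightarrow> nat \<Rightarrow> int" where "dig x j = dec x ! j"

lemma dec_enc[simp]: "dec (enc xs) = xs" by (simp add: enc_def dec_def)

definition Car :: "nat \<Rightarrow> nat \<Rightarrow> nat set" where
  "Car L M = enc ` {xs. length xs = L \<and> (\<forall>j<L. 0 \<le> xs!j \<and> xs!j < int M)}"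

definition Fd :: "nat \<Rightarrow> nat \<Rightarrow> int list list \<Rightarrow> int list" where
  "Fd L M xss = map (\<lambda>j. (xss!0!j - xss!1!j + xss!2!j) mod int M) [0..<L]"
definition Fg :: "nat \<Rightarrow> nat \<Rightarrow> nat \<Rightarrow> (int \<Rightarrow> int) \<Rightarrow> int list list \<Rightarrow> int list" where
  "Fg L M k \<phi> xss = map (\<lambda>j. (xss!0!j + (if j = Suc k then \<phi> (xss!1!k) * xss!2!j else 0)) mod int M) [0..<L]"
definition mkop :: "(int list list \<Rightarrow> int list) \<Rightarrow> nat \<times> (nat list \<Rightarrow> nat)" where
  "mkop F = (3, \<lambda>ns. enc (F (map dec ns)))"
definition NG :: "nat \<Rightarrow> nat \<Rightarrow> nat" where "NG L M = 2 * (M + 1) * L"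
definition phi :: "nat \<Rightarrow> nat \<Rightarrow> int \<Rightarrow> int" where
  "phi M i = (if i mod 2 = 0 then (\<lambda>x. x) else (\<lambda>x. if x mod int ((i div 2) mod (M+1)) = 0 then 1 else 0))"
definition lev :: "nat \<Rightarrow> nat \<Rightarrow> nat" where "lev M i = i div 2 div (M + 1)"
definition opsL :: "nat \<Rightarrow> nat \<Rightarrow> (nat \<times> (nat list \<Rightarrow> nat)) list" where
  "opsL L M = mkop (Fd L M) # map (\<lambda>i. mkop (Fg L M (lev M i) (phi M i))) [0..<NG L M]"
definition Alg :: "nat \<Rightarrow> nat \<Rightarrow> nat algebra" where
  "Alg L M = \<lparr>alg_carrier = Car L M, alg_ops = opsL L M\<rparr>"

lemma Car_iff: "x \<in> Car L M \<longleftrightarrow> x = enc (dec x) \<and> length (dec x) = L \<and> (\<forall>j<L. 0 \<le> dig x j \<and> dig x j < int M)"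
  unfolding Car_def dig_def by force

lemma enc_in_Car: "length xs = L \<Longrightarrow> (\<forall>j<L. 0 \<le> xs!j \<and> xs!j < int M) \<Longrightarrow> enc xs \<in> Car L M"
  unfolding Car_def by auto

lemma dig_enc[simp]: "dig (enc xs) j = xs ! j" by (simp add: dig_def)

lemma Car_eq: "x \<in> Car L M \<Longrightarrow> y \<in> Car L M \<Longrightarrow> (\<forall>j<L. dig x j = dig y j) \<Longrightarrow> x = y"
  unfolding Car_iff dig_def by (metis nth_equalityI)

lemma mapmod_Car: "M > 0 \<Longrightarrow> enc (map (\<lambda>j. f j mod int M) [0..<L]) \<in> Car L M"
  by (rule enc_in_Car) auto

lemma ops_cases:
  assumes "f < length (opsL L M)"
  shows "(f = 0 \<and> opsL L M ! f = mkop (Fd L M)) \<or> (\<exists>k \<phi>. opsL L M ! f = mkop (Fg L M k \<phi>))"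
proof (cases f)
  case 0 then show ?thesis by (simp add: opsL_def)
next
  case (Suc i)
  then have "i < NG L M" using assms by (simp add: opsL_def)
  then show ?thesis using Suc by (auto simp add: opsL_def)
qed

lemma ops_closed: "M > 0 \<Longrightarrow> (k, f) \<in> set (opsL L M) \<Longrightarrow> f xs \<in> Car L M"
  unfolding opsL_def mkop_def Fd_def Fg_def using mapmod_Car by auto

lemma finite_Alg: "M > 0 \<Longrightarrow> finite_algebra (Alg L M)"
proof -
  assume M: "M > 0"
  have "finite {xs::int list. set xs \<subseteq> {0..<int M} \<and> length xs = L}"
    by (rule finite_lists_length_eq) simp
  moreover have "{xs. length xs = L \<and> (\<forall>j<L. 0 \<le> xs!j \<and> xs!j < int M)} \<subseteq> {xs::int list. set xs \<subseteq> {0..<int M} \<and> length xs = L}"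
    by (auto simp: in_set_conv_nth)
  ultimately have "finite (Car L M)" unfolding Car_def by (meson finite_imageI finite_subset)
  moreover have "enc (replicate L 0) \<in> Car L M" using M by (intro enc_in_Car) auto
  ultimately show ?thesis unfolding finite_algebra_def Alg_def using ops_closed[OF M] by auto
qed

lemma teval_Car: "M > 0 \<Longrightarrow> (\<forall>v. e v \<in> Car L M) \<Longrightarrow> wf_trm (Alg L M) t \<Longrightarrow> teval (Alg L M) e t \<in> Car L M"
proof (cases t)
  case (TVar v) then show "M > 0 \<Longrightarrow> (\<forall>v. e v \<in> Car L M) \<Longrightarrow> ?thesis" by simp
next
  case (TOp f ts)
  assume M: "M > 0" and wf: "wf_trm (Alg L M) t"
  then have "f < length (opsL L M)" using TOp by (simp add: Alg_def)
  then have "opsL L M ! f \<in> set (opsL L M)" by simp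
  then show ?thesis using TOp ops_closed[OF M, of "fst (opsL L M ! f)" "snd (opsL L M ! f)"]
    by (simp add: Alg_def)
qed

lemma ops_arity: "f < length (opsL L M) \<Longrightarrow> fst (opsL L M ! f) = 3"
  using ops_cases[of f L M] by (auto simp: mkop_def)

definition R4l :: "nat \<Rightarrow> nat \<Rightarrow> int list \<Rightarrow> int list \<Rightarrow> int list \<Rightarrow> int list \<Rightarrow> bool" where
  "R4l M j A B C D \<longleftrightarrow> (\<forall>i<j. B!i = A!i \<and> C!i = A!i \<and> D!i = A!i) \<and> int M dvd (A!j + D!j - B!j - C!j)"

lemma dvd4: "(M::int) dvd (A + D - B - C) \<Longrightarrow> M dvd (A mod M + D mod M - B mod M - C mod M)"
proof -
  assume h: "M dvd (A + D - B - C)"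
  have "A mod M + D mod M - B mod M - C mod M = (A + D - B - C) - M * (A div M + D div M - B div M - C div M)"
    by (simp add: minus_div_mult_eq_mod[symmetric] algebra_simps)
  then show ?thesis using h by simp
qed

lemma Fd_R4:
  assumes "j < L" "R4l M j x1 x2 x3 x4" "R4l M j y1 y2 y3 y4" "R4l M j z1 z2 z3 z4"
  shows "R4l M j (Fd L M [x1,y1,z1]) (Fd L M [x2,y2,z2]) (Fd L M [x3,y3,z3]) (Fd L M [x4,y4,z4])"
proof -
  have a: "int M dvd ((x1!j - y1!j + z1!j) + (x4!j - y4!j + z4!j) - (x2!j - y2!j + z2!j) - (x3!j - y3!j + z3!j))"
  proof -
    have "(x1!j - y1!j + z1!j) + (x4!j - y4!j + z4!j) - (x2!j - y2!j + z2!j) - (x3!j - y3!j + z3!j)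
      = (x1!j + x4!j - x2!j - x3!j) - (y1!j + y4!j - y2!j - y3!j) + (z1!j + z4!j - z2!j - z3!j)" by simp
    then show ?thesis using assms unfolding R4l_def by (metis dvd_add dvd_diff)
  qed
  have b: "\<forall>i<L. \<forall>x y z. Fd L M [x,y,z] ! i = (x!i - y!i + z!i) mod int M"
    unfolding Fd_def by simp
  have P1: "\<forall>i<j. Fd L M [x2, y2, z2] ! i = Fd L M [x1, y1, z1] ! i \<and>
          Fd L M [x3, y3, z3] ! i = Fd L M [x1, y1, z1] ! i \<and>
          Fd L M [x4, y4, z4] ! i = Fd L M [x1, y1, z1] ! i"
  proof (intro allI impI)
    fix i assume i: "i < j"
    then have "i < L" using assms(1) by simp
    then show "Fd L M [x2, y2, z2] ! i = Fd L M [x1, y1, z1] ! i \<and>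
          Fd L M [x3, y3, z3] ! i = Fd L M [x1, y1, z1] ! i \<and>
          Fd L M [x4, y4, z4] ! i = Fd L M [x1, y1, z1] ! i"
      using b i assms(2-4) unfolding R4l_def by simp
  qed
  have P2: "int M dvd (Fd L M [x1, y1, z1] ! j + Fd L M [x4, y4, z4] ! j -
                 Fd L M [x2, y2, z2] ! j - Fd L M [x3, y3, z3] ! j)"
      using dvd4[OF a] assms(1) b by simp
  show ?thesis unfolding R4l_def using P1 P2 by blast
qed

lemma Fg_R4:
  assumes "j < L" "R4l M j x1 x2 x3 x4" "R4l M j y1 y2 y3 y4" "R4l M j z1 z2 z3 z4"
  shows "R4l M j (Fg L M k \<phi> [x1,y1,z1]) (Fg L M k \<phi> [x2,y2,z2]) (Fg L M k \<phi> [x3,y3,z3]) (Fg L M k \<phi> [x4,y4,z4])"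
proof -
  let ?G = "\<lambda>x y z. x!j + (if j = Suc k then \<phi> (y!k) * z!j else 0)"
  have a: "int M dvd (?G x1 y1 z1 + ?G x4 y4 z4 - ?G x2 y2 z2 - ?G x3 y3 z3)"
  proof (cases "j = Suc k")
    case True
    then have "y2!k = y1!k" "y3!k = y1!k" "y4!k = y1!k" using assms(3) unfolding R4l_def by auto
    then have "?G x1 y1 z1 + ?G x4 y4 z4 - ?G x2 y2 z2 - ?G x3 y3 z3
       = (x1!j + x4!j - x2!j - x3!j) + \<phi> (y1!k) * (z1!j + z4!j - z2!j - z3!j)"
      using True by (simp add: algebra_simps)
    then show ?thesis using assms unfolding R4l_def by (metis dvd_add dvd_mult)
  next
    case False
    then show ?thesis using assms unfolding R4l_def by simp
  qed
  have b: "\<forall>i<L. \<forall>x y z. Fg L M k \<phi> [x,y,z] ! i = (x!i + (if i = Suc k then \<phi> (y!k) * z!i else 0)) mod int M"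
    unfolding Fg_def by simp
  have c: "\<forall>i<j. i = Suc k \<longrightarrow> k < j" by auto
  have P1: "\<forall>i<j. Fg L M k \<phi> [x2, y2, z2] ! i = Fg L M k \<phi> [x1, y1, z1] ! i \<and>
          Fg L M k \<phi> [x3, y3, z3] ! i = Fg L M k \<phi> [x1, y1, z1] ! i \<and>
          Fg L M k \<phi> [x4, y4, z4] ! i = Fg L M k \<phi> [x1, y1, z1] ! i"
  proof (intro allI impI)
    fix i assume i: "i < j"
    then have "i < L" using assms(1) by simp
    then show "Fg L M k \<phi> [x2, y2, z2] ! i = Fg L M k \<phi> [x1, y1, z1] ! i \<and>
          Fg L M k \<phi> [x3, y3, z3] ! i = Fg L M k \<phi> [x1, y1, z1] ! i \<and>
          Fg L M k \<phi> [x4, y4, z4] ! i = Fg L M k \<phi> [x1, y1, z1] ! i"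
      using b i c[rule_format, OF i] assms(2-4) unfolding R4l_def by (simp split: if_split)
  qed
  have P2: "int M dvd (Fg L M k \<phi> [x1, y1, z1] ! j + Fg L M k \<phi> [x4, y4, z4] ! j -
                 Fg L M k \<phi> [x2, y2, z2] ! j - Fg L M k \<phi> [x3, y3, z3] ! j)"
      using dvd4[OF a] assms(1) b by simp
  show ?thesis unfolding R4l_def using P1 P2 by blast
qed

definition R4 :: "nat \<Rightarrow> nat \<Rightarrow> nat \<Rightarrow> nat \<Rightarrow> nat \<Rightarrow> nat \<Rightarrow> bool" where
  "R4 M j a b c d = R4l M j (dec a) (dec b) (dec c) (dec d)"

lemma term_R4:
  assumes "j < L" "\<forall>v. R4 M j (e1 v) (e2 v) (e3 v) (e4 v)"
  shows "wf_trm (Alg L M) t \<Longrightarrow> R4 M j (teval (Alg L M) e1 t) (teval (Alg L M) e2 t) (teval (Alg L M) e3 t) (teval (Alg L M) e4 t)"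
proof (induction t)
  case (TVar v)
  then show ?case using assms by simp
next
  case (TOp f ts)
  then have f: "f < length (opsL L M)" and l: "length ts = 3" and wf: "\<forall>t\<in>set ts. wf_trm (Alg L M) t"
    using ops_arity[of f L M] by (auto simp: Alg_def)
  then obtain t1 t2 t3 where ts: "ts = [t1,t2,t3]"
    by (auto simp: length_Suc_conv numeral_3_eq_3)
  have IH: "R4 M j (teval (Alg L M) e1 t) (teval (Alg L M) e2 t) (teval (Alg L M) e3 t) (teval (Alg L M) e4 t)"
    if "t \<in> set ts" for t using TOp.IH that wf by blast
  have I1: "R4l M j (dec (teval (Alg L M) e1 t1)) (dec (teval (Alg L M) e2 t1)) (dec (teval (Alg L M) e3 t1)) (dec (teval (Alg L M) e4 t1))"
    using IH[of t1] ts unfolding R4_def by simp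
  have I2: "R4l M j (dec (teval (Alg L M) e1 t2)) (dec (teval (Alg L M) e2 t2)) (dec (teval (Alg L M) e3 t2)) (dec (teval (Alg L M) e4 t2))"
    using IH[of t2] ts unfolding R4_def by simp
  have I3: "R4l M j (dec (teval (Alg L M) e1 t3)) (dec (teval (Alg L M) e2 t3)) (dec (teval (Alg L M) e3 t3)) (dec (teval (Alg L M) e4 t3))"
    using IH[of t3] ts unfolding R4_def by simp
  from ops_cases[OF f] show ?case
  proof
    assume "f = 0 \<and> opsL L M ! f = mkop (Fd L M)"
    then have "opsL L M ! f = mkop (Fd L M)" by blast
    then show ?case using Fd_R4[OF assms(1) I1 I2 I3] ts unfolding R4_def by (simp add: Alg_def mkop_def)
  next
    assume "\<exists>k \<phi>. opsL L M ! f = mkop (Fg L M k \<phi>)"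
    then obtain k \<phi> where "opsL L M ! f = mkop (Fg L M k \<phi>)" by blast
    then show ?case using Fg_R4[OF assms(1) I1 I2 I3] ts unfolding R4_def by (simp add: Alg_def mkop_def)
  qed
qed


definition th :: "nat \<Rightarrow> nat \<Rightarrow> nat \<Rightarrow> (nat \<times> nat) set" where
  "th L M j = {(x,y). x \<in> Car L M \<and> y \<in> Car L M \<and> (\<forall>i<j. dig x i = dig y i)}"

lemma Fd_agree: "i < L \<Longrightarrow> (\<forall>i'\<le>i. x'!i' = x!i' \<and> y'!i' = y!i' \<and> z'!i' = z!i') \<Longrightarrow> Fd L M [x',y',z'] ! i = Fd L M [x,y,z] ! i"
  unfolding Fd_def by simp

lemma Fg_agree: "i < L \<Longrightarrow> (\<forall>i'\<le>i. x'!i' = x!i' \<and> y'!i' = y!i' \<and> z'!i' = z!i') \<Longrightarrow> Fg L M k \<phi> [x',y',z'] ! i = Fg L M k \<phi> [x,y,z] ! i"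
  unfolding Fg_def by simp

lemma list3: "length xs = 3 \<Longrightarrow> \<exists>a b c. xs = [a,b,c]"
  by (auto simp: length_Suc_conv numeral_3_eq_3)

lemma th_cong:
  assumes M: "M > 0" and j: "j \<le> L"
  shows "is_cong (Alg L M) (th L M j)"
proof -
  have eq: "equiv (Car L M) (th L M j)"
    unfolding equiv_def refl_on_def sym_def trans_def th_def by auto
  have comp: "(f xs, f ys) \<in> th L M j"
    if kf: "(k, f) \<in> set (opsL L M)" and lx: "length xs = k" and ly: "length ys = k"
      and rel: "list_all2 (\<lambda>x y. (x, y) \<in> th L M j) xs ys" for k f xs ys
  proof -
    from kf obtain fi where fi: "fi < length (opsL L M)" "opsL L M ! fi = (k, f)"
      by (metis in_set_conv_nth)
    then have k3: "k = 3" using ops_arity[OF fi(1)] by simp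
    obtain x1 x2 x3 where xs: "xs = [x1,x2,x3]" using list3 lx k3 by blast
    obtain y1 y2 y3 where ys: "ys = [y1,y2,y3]" using list3 ly k3 by blast
    have r: "(x1,y1) \<in> th L M j" "(x2,y2) \<in> th L M j" "(x3,y3) \<in> th L M j"
      using rel xs ys by auto
    have ag: "\<forall>i'\<le>i. dec y1!i' = dec x1!i' \<and> dec y2!i' = dec x2!i' \<and> dec y3!i' = dec x3!i'" if "i < j" for i
      using r that unfolding th_def dig_def by auto
    have inC: "f xs \<in> Car L M" "f ys \<in> Car L M" using ops_closed[OF M kf] by auto
    from ops_cases[OF fi(1)] show ?thesis
    proof
      assume "fi = 0 \<and> opsL L M ! fi = mkop (Fd L M)"
      then have f: "f = (\<lambda>ns. enc (Fd L M (map dec ns)))" using fi by (simp add: mkop_def)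
      show ?thesis using inC unfolding th_def
        using Fd_agree[of _ L "dec x1" "dec y1" "dec x2" "dec y2" "dec x3" "dec y3" M] ag j
        by (simp add: f xs ys)
    next
      assume "\<exists>k \<phi>. opsL L M ! fi = mkop (Fg L M k \<phi>)"
      then obtain kk \<phi> where "opsL L M ! fi = mkop (Fg L M kk \<phi>)" by blast
      then have f: "f = (\<lambda>ns. enc (Fg L M kk \<phi> (map dec ns)))" using fi by (simp add: mkop_def)
      show ?thesis using inC unfolding th_def
        using Fg_agree[of _ L "dec x1" "dec y1" "dec x2" "dec y2" "dec x3" "dec y3" M kk \<phi>] ag j
        by (simp add: f xs ys)
    qed
  qed
  show ?thesis unfolding is_cong_def using eq comp by (auto simp: Alg_def)
qed

lemma mod_dvd_eq: "0 \<le> (x::int) \<Longrightarrow> x < M \<Longrightarrow> 0 \<le> y \<Longrightarrow> y < M \<Longrightarrow> M dvd (x - y) \<Longrightarrow> x = y"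
  by (metis mod_eq_dvd_iff mod_pos_pos_trivial)

lemma th_centr:
  assumes M: "M > 0" and j: "j < L"
  shows "centralizes (Alg L M) (th L M j) (th L M j) (th L M (Suc j))"
  unfolding centralizes_def
proof (intro allI impI)
  fix t :: "(nat + nat) trm" and a b c d :: "nat \<Rightarrow> nat"
  assume wf: "wf_trm (Alg L M) t"
    and ab: "(\<forall>i. (a i, b i) \<in> th L M j) \<and> (\<forall>i. (c i, d i) \<in> th L M j)"
    and h: "(teval (Alg L M) (case_sum a c) t, teval (Alg L M) (case_sum a d) t) \<in> th L M (Suc j)"
  let ?T = "\<lambda>e. teval (Alg L M) e t"
  have R: "\<forall>v. R4 M j (case_sum a c v) (case_sum a d v) (case_sum b c v) (case_sum b d v)"
  proof
    fix v show "R4 M j (case_sum a c v) (case_sum a d v) (case_sum b c v) (case_sum b d v)"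
      using ab by (cases v) (auto simp: R4_def R4l_def th_def dig_def)
  qed
  have R': "R4 M j (?T (case_sum a c)) (?T (case_sum a d)) (?T (case_sum b c)) (?T (case_sum b d))"
    using term_R4[OF j R wf] .
  have inC: "\<forall>v. case_sum a c v \<in> Car L M" "\<forall>v. case_sum b c v \<in> Car L M"
            "\<forall>v. case_sum b d v \<in> Car L M"
    using ab unfolding th_def by (auto split: sum.split)
  have C3: "?T (case_sum b c) \<in> Car L M" and C4: "?T (case_sum b d) \<in> Car L M"
    using teval_Car[OF M inC(2) wf] teval_Car[OF M inC(3) wf] by auto
  have hj: "dig (?T (case_sum a c)) j = dig (?T (case_sum a d)) j" using h unfolding th_def by auto
  have dv: "int M dvd (dig (?T (case_sum b d)) j - dig (?T (case_sum b c)) j)"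
    using R' hj unfolding R4_def R4l_def dig_def by simp
  have "dig (?T (case_sum b d)) j = dig (?T (case_sum b c)) j"
    using mod_dvd_eq[OF _ _ _ _ dv] C3 C4 j unfolding Car_iff by blast
  moreover have "\<forall>i<j. dig (?T (case_sum b c)) i = dig (?T (case_sum b d)) i"
    using R' unfolding R4_def R4l_def dig_def by simp
  ultimately show "(?T (case_sum b c), ?T (case_sum b d)) \<in> th L M (Suc j)"
    using C3 C4 unfolding th_def by (auto simp: less_Suc_eq)
qed

lemma centr_mono: "\<alpha>' \<subseteq> \<alpha> \<Longrightarrow> \<beta>' \<subseteq> \<beta> \<Longrightarrow> centralizes A \<alpha> \<beta> \<delta> \<Longrightarrow> centralizes A \<alpha>' \<beta>' \<delta>"
  unfolding centralizes_def by blast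

lemma derived_sub: "M > 0 \<Longrightarrow> i \<le> L \<Longrightarrow> derived (Alg L M) i \<subseteq> th L M i"
proof (induction i)
  case 0 then show ?case by (auto simp: th_def Alg_def)
next
  case (Suc i)
  then have "is_cong (Alg L M) (th L M (Suc i))" using th_cong by simp
  moreover have "centralizes (Alg L M) (derived (Alg L M) i) (derived (Alg L M) i) (th L M (Suc i))"
    using centr_mono[OF _ _ th_centr[of M i L]] Suc by simp
  ultimately show ?case by (auto simp: commutator_def)
qed

lemma Id_sub: "Id_on (alg_carrier A) \<subseteq> derived A i"
proof (induction i)
  case 0 then show ?case by auto
next
  case (Suc i)
  show ?case unfolding derived.simps commutator_def
  proof (rule Inter_greatest)
    fix \<delta> assume "\<delta> \<in> {\<delta>. is_cong A \<delta> \<and> centralizes A (derived A i) (derived A i) \<delta>}"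
    then have "equiv (alg_carrier A) \<delta>" by (simp add: is_cong_def)
    then show "Id_on (alg_carrier A) \<subseteq> \<delta>" unfolding equiv_def refl_on_def by auto
  qed
qed

lemma solvable_Alg: "M > 0 \<Longrightarrow> solvable_alg (Alg L M)"
proof -
  assume M: "M > 0"
  have "th L M L \<subseteq> Id_on (Car L M)" unfolding th_def using Car_eq by auto
  then have "derived (Alg L M) L \<subseteq> Id_on (alg_carrier (Alg L M))"
    using derived_sub[OF M, of L L] by (auto simp: Alg_def)
  then show ?thesis unfolding solvable_alg_def using Id_sub by blast
qed

lemma malcev_Alg: "M > 0 \<Longrightarrow> has_malcev (Alg L M)"
proof -
  assume M: "M > 0"
  let ?d = "TOp 0 [TVar 0, TVar 1, TVar 2] :: nat trm"
  have wf: "wf_trm (Alg L M) ?d" by (simp add: Alg_def opsL_def mkop_def)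
  have ev: "teval (Alg L M) e ?d = enc (Fd L M [dec (e 0), dec (e 1), dec (e 2)])" for e
    by (simp add: Alg_def opsL_def mkop_def)
  have fx: "enc (map (\<lambda>j. dec x ! j) [0..<L]) = x" if "x \<in> Car L M" for x
    using that unfolding Car_iff by (metis map_nth)
  have A: "teval (Alg L M) (env3 x y y) ?d = x" if "x \<in> Car L M" "y \<in> Car L M" for x y
  proof -
    have "Fd L M [dec x, dec y, dec y] = map (\<lambda>j. dec x ! j) [0..<L]"
      using that unfolding Fd_def Car_iff dig_def by simp
    moreover have "teval (Alg L M) (env3 x y y) ?d = enc (Fd L M [dec x, dec y, dec y])"
      using ev[of "env3 x y y"] by (simp add: env3_def)
    ultimately show ?thesis using fx[OF that(1)] by simp
  qed
  have B: "teval (Alg L M) (env3 y y x) ?d = x" if "x \<in> Car L M" "y \<in> Car L M" for x y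
  proof -
    have "Fd L M [dec y, dec y, dec x] = map (\<lambda>j. dec x ! j) [0..<L]"
      using that unfolding Fd_def Car_iff dig_def by simp
    moreover have "teval (Alg L M) (env3 y y x) ?d = enc (Fd L M [dec y, dec y, dec x])"
      using ev[of "env3 y y x"] by (simp add: env3_def)
    ultimately show ?thesis using fx[OF that(1)] by simp
  qed
  show ?thesis unfolding has_malcev_def
    by (rule exI[of _ ?d]) (use wf A B in \<open>auto simp: Alg_def\<close>)
qed


lemma cvals_append: "cvals A inp acc (xs @ ys) = cvals A inp (cvals A inp acc xs) ys"
  by (induction xs arbitrary: acc) auto

lemma cvals_snoc: "cvals A inp acc (xs @ [c]) = cvals A inp acc xs @ [cnode_val A inp (cvals A inp acc xs) c]"
proof (induction xs arbitrary: acc)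
  case Nil then show ?case by simp
next
  case (Cons a xs) then show ?case by simp
qed

lemma cvals_prefix: "\<exists>r. cvals A inp acc xs = acc @ r \<and> length r = length xs"
proof (induction xs arbitrary: acc)
  case Nil then show ?case by simp
next
  case (Cons a xs)
  then obtain r where "cvals A inp (acc @ [cnode_val A inp acc a]) xs = (acc @ [cnode_val A inp acc a]) @ r \<and> length r = length xs"
    by blast
  then show ?case by (intro exI[of _ "cnode_val A inp acc a # r"]) simp
qed

lemma cvals_length[simp]: "length (cvals A inp acc xs) = length acc + length xs"
  using cvals_prefix[of A inp acc xs] by auto

lemma cvals_nth_old: "i < length acc \<Longrightarrow> cvals A inp acc xs ! i = acc ! i"
  using cvals_prefix[of A inp acc xs] by (auto simp: nth_append)

section \<open>Path sums of ABPs\<close>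

definition acyc :: "(nat \<times> nat \<times> lab) list \<Rightarrow> bool" where
  "acyc E \<longleftrightarrow> (\<forall>e\<in>set E. fst e < fst (snd e))"

definition pset :: "(nat \<times> nat \<times> lab) list \<Rightarrow> nat \<Rightarrow> nat \<Rightarrow> nat list set" where
  "pset E s t = {ps. is_path E s t ps}"

definition pw :: "(nat \<times> nat \<times> lab) list \<Rightarrow> (nat \<Rightarrow> int) \<Rightarrow> nat list \<Rightarrow> int" where
  "pw E x ps = prod_list (map (\<lambda>i. lab_val x (snd (snd (E ! i)))) ps)"

definition psum :: "(nat \<times> nat \<times> lab) list \<Rightarrow> nat \<Rightarrow> (nat \<Rightarrow> int) \<Rightarrow> nat \<Rightarrow> int" where
  "psum E t x u = (\<Sum>ps \<in> pset E u t. pw E x ps)"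

lemma path_props:
  assumes "acyc E"
  shows "is_path E s t ps \<Longrightarrow> distinct ps \<and> set ps \<subseteq> {..<length E} \<and> (\<forall>i\<in>set ps. s \<le> fst (E ! i))"
proof (induction ps arbitrary: s)
  case Nil then show ?case by simp
next
  case (Cons i ps)
  then have i: "i < length E" "fst (E ! i) = s" and p: "is_path E (fst (snd (E ! i))) t ps" by auto
  have lt: "fst (E ! i) < fst (snd (E ! i))" using assms i(1) unfolding acyc_def by auto
  from Cons.IH[OF p] have IH: "distinct ps" "set ps \<subseteq> {..<length E}" "\<forall>j\<in>set ps. fst (snd (E ! i)) \<le> fst (E ! j)"
    by auto
  have "i \<notin> set ps" using IH(3) lt by fastforce
  then show ?case using IH i lt by fastforce
qed

lemma path_len: "acyc E \<Longrightarrow> is_path E s t ps \<Longrightarrow> length ps \<le> length E"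
proof -
  assume a: "acyc E" "is_path E s t ps"
  from path_props[OF a] have "distinct ps" "set ps \<subseteq> {..<length E}" by auto
  then have "card (set ps) \<le> card {..<length E}" by (intro card_mono) auto
  then show ?thesis using \<open>distinct ps\<close> by (simp add: distinct_card)
qed

lemma pset_finite: "acyc E \<Longrightarrow> finite (pset E s t)"
proof -
  assume a: "acyc E"
  have "pset E s t \<subseteq> {ps. set ps \<subseteq> {..<length E} \<and> length ps \<le> length E}"
    using path_props[OF a] path_len[OF a] unfolding pset_def by blast
  moreover have "finite {ps. set ps \<subseteq> {..<length E} \<and> length ps \<le> length E}"
    by (rule finite_lists_length_le) simp
  ultimately show ?thesis by (rule finite_subset)
qed

lemma pset_decomp:
  "pset E u t = (if u = t then {[]} else {}) \<union>
     (\<Union>i \<in> {i. i < length E \<and> fst (E ! i) = u}. Cons i ` pset E (fst (snd (E ! i))) t)"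
proof (rule set_eqI)
  fix ps show "ps \<in> pset E u t \<longleftrightarrow> ps \<in> (if u = t then {[]} else {}) \<union>
     (\<Union>i \<in> {i. i < length E \<and> fst (E ! i) = u}. Cons i ` pset E (fst (snd (E ! i))) t)"
    by (cases ps) (auto simp: pset_def)
qed

lemma psum_rec:
  assumes "acyc E"
  shows "psum E t x u = (if u = t then 1 else 0) +
     (\<Sum>i<length E. if fst (E ! i) = u then lab_val x (snd (snd (E ! i))) * psum E t x (fst (snd (E ! i))) else 0)"
proof -
  let ?I = "{i. i < length E \<and> fst (E ! i) = u}"
  let ?U = "\<Union>i \<in> ?I. Cons i ` pset E (fst (snd (E ! i))) t"
  have fin: "finite ?I" by simp
  have finU: "finite ?U" using pset_finite[OF assms] by auto
  have disj: "(if u = t then {[]} else {}) \<inter> ?U = {}" by auto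
  have "psum E t x u = (\<Sum>ps \<in> (if u = t then {[]} else {}). pw E x ps) + (\<Sum>ps\<in>?U. pw E x ps)"
    unfolding psum_def by (subst pset_decomp) (rule sum.union_disjoint, simp, rule finU, rule disj)
  also have "(\<Sum>ps \<in> (if u = t then {[]} else {}). pw E x ps) = (if u = t then 1 else 0)"
    by (simp add: pw_def)
  also have "(\<Sum>ps\<in>?U. pw E x ps) = (\<Sum>i\<in>?I. \<Sum>ps \<in> Cons i ` pset E (fst (snd (E ! i))) t. pw E x ps)"
    by (rule sum.UNION_disjoint) (use pset_finite[OF assms] in auto)
  also have "\<dots> = (\<Sum>i\<in>?I. lab_val x (snd (snd (E ! i))) * psum E t x (fst (snd (E ! i))))"
  proof (rule sum.cong[OF refl])
    fix i assume "i \<in> ?I"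
    have "(\<Sum>ps \<in> Cons i ` pset E (fst (snd (E ! i))) t. pw E x ps) = (\<Sum>ps \<in> pset E (fst (snd (E ! i))) t. pw E x (i # ps))"
      by (rule sum.reindex_cong[of "Cons i"]) (auto simp: inj_on_def)
    also have "\<dots> = lab_val x (snd (snd (E ! i))) * psum E t x (fst (snd (E ! i)))"
      by (simp add: pw_def psum_def sum_distrib_left)
    finally show "(\<Sum>ps \<in> Cons i ` pset E (fst (snd (E ! i))) t. pw E x ps) = lab_val x (snd (snd (E ! i))) * psum E t x (fst (snd (E ! i)))" .
  qed
  also have "\<dots> = (\<Sum>i<length E. if fst (E ! i) = u then lab_val x (snd (snd (E ! i))) * psum E t x (fst (snd (E ! i))) else 0)"
  proof -
    have "?I = {i \<in> {..<length E}. fst (E ! i) = u}" by auto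
    then show ?thesis
      using sum.inter_filter[of "{..<length E}" "\<lambda>i. lab_val x (snd (snd (E ! i))) * psum E t x (fst (snd (E ! i)))" "\<lambda>i. fst (E ! i) = u"]
      by simp
  qed
  finally show ?thesis .
qed

lemma abp_val_psum:
  assumes "abp_wf p nv E nvars"
  shows "abp_val p nv E x = psum E (nv - 1) x 0 mod int p"
proof -
  have a: "acyc E" using assms unfolding abp_wf_def acyc_def by auto
  have "{ps. length ps \<le> length E \<and> is_path E 0 (nv - 1) ps} = pset E 0 (nv - 1)"
    using path_len[OF a] unfolding pset_def by blast
  then show ?thesis unfolding abp_val_def psum_def pw_def by simp
qed


definition zero :: "nat \<Rightarrow> nat" where "zero L = enc (replicate L 0)"
definition cst :: "nat \<Rightarrow> nat \<Rightarrow> int \<Rightarrow> nat" where "cst L k c = enc ((replicate L 0)[k := c])"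
definition gid :: "nat \<Rightarrow> nat \<Rightarrow> nat" where "gid M k = 1 + 2 * (M + 1) * k"
definition gtest :: "nat \<Rightarrow> nat \<Rightarrow> nat \<Rightarrow> nat" where "gtest M k q = 2 + 2 * (q + (M + 1) * k)"

lemma ops_gid: "k < L \<Longrightarrow> gid M k < length (opsL L M) \<and> opsL L M ! gid M k = mkop (Fg L M k (\<lambda>x. x))"
proof -
  assume k: "k < L"
  have "2 * (M + 1) * k < 2 * (M + 1) * L" using k by (intro mult_strict_left_mono) auto
  moreover have "lev M (2 * (M + 1) * k) = k" unfolding lev_def
    by (metis div_mult_self1_is_m mult.assoc mult.commute zero_less_Suc add.commute plus_1_eq_Suc zero_less_numeral)
  moreover have "phi M (2 * (M + 1) * k) = (\<lambda>x. x)" unfolding phi_def by simp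
  ultimately show ?thesis unfolding gid_def opsL_def NG_def by simp
qed

lemma ops_gtest: "k < L \<Longrightarrow> q \<le> M \<Longrightarrow> gtest M k q < length (opsL L M) \<and>
   opsL L M ! gtest M k q = mkop (Fg L M k (\<lambda>x. if x mod int q = 0 then 1 else 0))"
proof -
  assume k: "k < L" and q: "q \<le> M"
  let ?i = "1 + 2 * (q + (M + 1) * k)"
  have "q + (M + 1) * k < (M + 1) * (k + 1)" using q by simp
  also have "\<dots> \<le> (M + 1) * L" using k by (intro mult_le_mono2) simp
  finally have "?i < 2 * (M + 1) * L" by simp
  moreover have d: "?i div 2 = q + (M + 1) * k" by simp
  moreover have "(q + (M + 1) * k) div (M + 1) = k"
    using div_mult_self2[of "M+1" q k] q by (simp del: div_mult_self2 add: div_less)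
  moreover have "(q + (M + 1) * k) mod (M + 1) = q"
    using mod_mult_self2[of q "M+1" k] q by (simp del: mod_mult_self2 add: mod_less)
  moreover have "?i mod 2 = 1" by presburger
  ultimately show ?thesis unfolding gtest_def opsL_def NG_def lev_def phi_def
    by (simp only: nth_Cons_Suc nth_map_upt add_0 plus_1_eq_Suc[symmetric] add.commute[of 1] nth_map nth_upt) auto
qed

lemma dig_cst: "k < L \<Longrightarrow> i < L \<Longrightarrow> dig (cst L k c) i = (if i = k then c else 0)"
  unfolding cst_def by simp

lemma dig_zero: "i < L \<Longrightarrow> dig (zero L) i = 0"
  unfolding zero_def by simp

lemma nth_rep_upd: "j < L \<Longrightarrow> (replicate L (0::int))[k := c] ! j = (if j = k then c else 0)"
  by (cases "j = k") auto

lemma cst_Car: "0 \<le> c \<Longrightarrow> c < int M \<Longrightarrow> cst L k c \<in> Car L M"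
proof -
  assume "0 \<le> c" "c < int M"
  then show ?thesis unfolding cst_def
    by (intro enc_in_Car) (auto simp: nth_rep_upd)
qed

lemma zero_Car: "M > 0 \<Longrightarrow> zero L \<in> Car L M"
  unfolding zero_def by (rule enc_in_Car) auto

lemma val_gid:
  assumes "k < L" "i < L"
  shows "dig (cnode_val (Alg L M) inp acc (CGate (gid M k) [x, y, z])) i =
     (dig (acc ! x) i + (if i = Suc k then dig (acc ! y) k * dig (acc ! z) i else 0)) mod int M"
  using ops_gid[OF assms(1), of M] assms(2) by (simp add: Alg_def mkop_def Fg_def dig_def)

lemma val_gtest:
  assumes "k < L" "q \<le> M" "i < L"
  shows "dig (cnode_val (Alg L M) inp acc (CGate (gtest M k q) [x, y, z])) i =
     (dig (acc ! x) i + (if i = Suc k then (if dig (acc ! y) k mod int q = 0 then 1 else 0) * dig (acc ! z) i else 0)) mod int M"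
  using ops_gtest[OF assms(1,2)] assms(3) by (simp add: Alg_def mkop_def Fg_def dig_def)

lemma val_d:
  assumes "i < L"
  shows "dig (cnode_val (Alg L M) inp acc (CGate 0 [x, y, z])) i = (dig (acc ! x) i - dig (acc ! y) i + dig (acc ! z) i) mod int M"
  using assms by (simp add: Alg_def opsL_def mkop_def Fd_def dig_def)


definition Bsz :: "babp_gate \<Rightarrow> nat" where "Bsz g = 1 + 2 * length (g_E g)"
definition widx :: "nat \<Rightarrow> babp_gate \<Rightarrow> nat \<Rightarrow> nat" where
  "widx off g v = off + 1 + (g_nv g - 1 - v) * Bsz g + 2 * length (g_E g)"
definition elab :: "babp_gate \<Rightarrow> nat \<Rightarrow> lab" where "elab g i = snd (snd (g_E g ! i))"
definition esrc :: "babp_gate \<Rightarrow> nat \<Rightarrow> nat" where "esrc g i = fst (g_E g ! i)"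
definition etgt :: "babp_gate \<Rightarrow> nat \<Rightarrow> nat" where "etgt g i = fst (snd (g_E g ! i))"

definition estep :: "nat \<Rightarrow> nat \<Rightarrow> nat \<Rightarrow> nat list \<Rightarrow> babp_gate \<Rightarrow> nat \<Rightarrow> nat \<Rightarrow> nat \<Rightarrow> nat cnode list" where
  "estep L M a outs g off r i =
    (let base = off + 1 + r * Bsz g + 2 * i; on = (esrc g i = g_nv g - 1 - r) in
     [CConst (cst L (a - 1) (if on then (case elab g i of LConst c \<Rightarrow> c | LVar _ \<Rightarrow> 0) else 0)),
      CGate (gid M (a - 1)) [base,
        (if on then (case elab g i of LVar j \<Rightarrow> outs ! (g_wires g ! j) | LConst _ \<Rightarrow> base + 1) else base + 1),
        (if on then widx off g (etgt g i) else base + 1)]])"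

definition vpart :: "nat \<Rightarrow> nat \<Rightarrow> nat \<Rightarrow> nat list \<Rightarrow> babp_gate \<Rightarrow> nat \<Rightarrow> nat \<Rightarrow> nat \<Rightarrow> nat cnode list" where
  "vpart L M a outs g off r i = CConst (cst L a (if r = 0 then 1 else 0)) # concat (map (estep L M a outs g off r) [0..<i])"

definition xv :: "babp_gate \<Rightarrow> bool list \<Rightarrow> nat \<Rightarrow> int" where
  "xv g bits = (\<lambda>j. if bits ! (g_wires g ! j) then 1 else 0)"

definition PS :: "babp_gate \<Rightarrow> bool list \<Rightarrow> nat \<Rightarrow> int" where
  "PS g bits v = psum (g_E g) (g_nv g - 1) (xv g bits) v"

lemma modstep: "((X::int) mod M + c * (Y mod M)) mod M = (X + c * Y) mod M"
  by (metis mod_add_left_eq mod_add_right_eq mod_mult_right_eq)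

lemma modstep2: "((X::int) + c * (Y mod M)) mod M = (X + c * Y) mod M"
  by (metis mod_add_right_eq mod_mult_right_eq)

lemma widx_lt:
  assumes "g_nv g - 1 - r < v" "v < g_nv g" "r < g_nv g"
  shows "widx off g v < off + 1 + r * Bsz g"
proof -
  let ?q = "g_nv g - 1 - v"
  have "Suc ?q \<le> r" using assms by linarith
  then have "Suc ?q * Bsz g \<le> r * Bsz g" by (rule mult_le_mono1)
  moreover have "?q * Bsz g + 2 * length (g_E g) < Suc ?q * Bsz g" by (simp add: Bsz_def)
  ultimately show ?thesis unfolding widx_def by linarith
qed

lemma estep_len[simp]: "length (estep L M a outs g off r i) = 2"
  by (simp add: estep_def Let_def)

lemma concat_len: "(\<And>i. i < n \<Longrightarrow> length (f i) = B) \<Longrightarrow> length (concat (map f [0..<n])) = n * B"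
  by (induction n) auto

lemma vpart_len: "length (vpart L M a outs g off r i) = 1 + 2 * i"
  unfolding vpart_def by (simp add: concat_len)

lemma vpart_Suc: "vpart L M a outs g off r (Suc i) = vpart L M a outs g off r i @ estep L M a outs g off r i"
  unfolding vpart_def by simp

lemma gwf_facts:
  assumes "gate_wf p nb g"
  shows "abp_wf p (g_nv g) (g_E g) (length (g_wires g))" "\<forall>w \<in> set (g_wires g). w < nb"
    "g_T g \<subseteq> {0..<int p}" "acyc (g_E g)"
  using assms unfolding gate_wf_def abp_wf_def acyc_def by auto

lemma edge_facts:
  assumes "abp_wf p nv E nvars" "i < length E"
  shows "fst (E ! i) < fst (snd (E ! i))" "fst (snd (E ! i)) < nv"
    "\<And>j. snd (snd (E ! i)) = LVar j \<Longrightarrow> j < nvars"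
    "\<And>c. snd (snd (E ! i)) = LConst c \<Longrightarrow> 0 \<le> c \<and> c < int p"
proof -
  have "E ! i \<in> set E" using assms(2) by simp
  then obtain u v l where e: "E ! i = (u, v, l)" "(u, v, l) \<in> set E" by (metis prod_cases3)
  then have h: "u < v \<and> v < nv \<and> (case l of LVar j \<Rightarrow> j < nvars | LConst c \<Rightarrow> 0 \<le> c \<and> c < int p)"
    using assms(1) unfolding abp_wf_def by fastforce
  show "fst (E ! i) < fst (snd (E ! i))" "fst (snd (E ! i)) < nv" using h e by auto
  show "\<And>j. snd (snd (E ! i)) = LVar j \<Longrightarrow> j < nvars" using h e by auto
  show "\<And>c. snd (snd (E ! i)) = LConst c \<Longrightarrow> 0 \<le> c \<and> c < int p" using h e by auto
qed

lemma vpart_correct: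
  fixes L M :: nat and inp V0 bits outs
  defines "A \<equiv> Alg L M"
  assumes M: "2 \<le> M" and a: "1 \<le> a" "a < L"
    and wf: "gate_wf p (length bits) g" and lo: "length outs = length bits"
    and OUT: "\<forall>w<length bits. outs ! w < length V0 \<and> dig (V0 ! (outs ! w)) (a - 1) = (if bits ! w then 1 else 0)"
    and len: "length V0 = off + 1 + r * Bsz g" and r: "r < g_nv g"
    and WH: "\<forall>v. g_nv g - 1 - r < v \<and> v < g_nv g \<longrightarrow> dig (V0 ! widx off g v) a = PS g bits v mod int M"
  shows "i \<le> length (g_E g) \<Longrightarrow> dig (last (cvals A inp V0 (vpart L M a outs g off r i))) a =
     ((if r = 0 then 1 else 0) + (\<Sum>i'<i. if esrc g i' = g_nv g - 1 - r
          then lab_val (xv g bits) (elab g i') * PS g bits (etgt g i') else 0)) mod int M"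
proof (induction i)
  case 0
  have "(if r = 0 then 1 else 0 :: int) mod int M = (if r = 0 then 1 else 0)" using M by simp
  then show ?case using a by (simp add: vpart_def dig_cst)
next
  case (Suc i)
  then have i: "i < length (g_E g)" by simp
  let ?u = "g_nv g - 1 - r"
  let ?W = "cvals A inp V0 (vpart L M a outs g off r i)"
  let ?base = "off + 1 + r * Bsz g + 2 * i"
  have lW: "length ?W = ?base + 1" using len by (simp add: vpart_len)
  have IH: "dig (last ?W) a = ((if r = 0 then 1 else 0) + (\<Sum>i'<i. if esrc g i' = ?u
          then lab_val (xv g bits) (elab g i') * PS g bits (etgt g i') else 0)) mod int M"
    using Suc by simp
  obtain n1 n2 where st: "estep L M a outs g off r i = [n1, n2]" by (simp add: estep_def Let_def)
  let ?v1 = "cnode_val A inp ?W n1"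
  have cv: "cvals A inp V0 (vpart L M a outs g off r (Suc i)) = ?W @ [?v1, cnode_val A inp (?W @ [?v1]) n2]"
    unfolding vpart_Suc cvals_append st by simp
  have old: "(?W @ [?v1]) ! j = V0 ! j" if "j < length V0" for j
  proof -
    have "j < length ?W" using that lW len by linarith
    then have "(?W @ [?v1]) ! j = ?W ! j" by (rule nth_append_left)
    then show ?thesis using cvals_nth_old[OF that, of A inp] by simp
  qed
  have lastW: "(?W @ [?v1]) ! ?base = last ?W"
  proof -
    have ne: "?W \<noteq> []"
    proof
      assume "?W = []"
      then have "length ?W = 0" by (simp only: list.size)
      with lW show False by linarith
    qed
    have b: "length ?W - 1 = ?base" using lW by linarith
    have "last ?W = ?W ! (length ?W - 1)" by (rule last_conv_nth[OF ne])
    then have "last ?W = ?W ! ?base" by (simp only: b)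
    moreover have "?base < length ?W" using lW by linarith
    ultimately show ?thesis by (simp only: nth_append_left)
  qed
  have v1: "(?W @ [?v1]) ! (?base + 1) = ?v1"
  proof -
    have "(?W @ [?v1]) ! length ?W = ?v1" by (rule nth_append_length)
    then show ?thesis by (simp only: lW)
  qed
  have am: "a - 1 < L" "Suc (a - 1) = a" using a by auto
  have gw: "abp_wf p (g_nv g) (g_E g) (length (g_wires g))" "\<forall>w \<in> set (g_wires g). w < length bits"
    using gwf_facts[OF wf] by auto
  note ef = edge_facts[OF gw(1) i]
  have key: "dig (cnode_val A inp (?W @ [?v1]) n2) a = (dig (last ?W) a + (if esrc g i = ?u
          then lab_val (xv g bits) (elab g i) * PS g bits (etgt g i) else 0)) mod int M"
  proof (cases "esrc g i = ?u")
    case on: True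
    have tg: "?u < etgt g i" "etgt g i < g_nv g" using ef on unfolding esrc_def etgt_def by auto
    have wl: "widx off g (etgt g i) < length V0" using widx_lt[OF tg r] len by simp
    have wv: "dig ((?W @ [?v1]) ! widx off g (etgt g i)) a = PS g bits (etgt g i) mod int M"
      using old[OF wl] WH tg by simp
    show ?thesis
    proof (cases "elab g i")
      case (LVar j)
      then have "j < length (g_wires g)" using ef(3) unfolding elab_def by blast
      then have w: "g_wires g ! j < length bits" using gw(2) by simp
      have n2: "n2 = CGate (gid M (a - 1)) [?base, outs ! (g_wires g ! j), widx off g (etgt g i)]"
        using st on LVar by (simp add: estep_def Let_def)
      have mv: "dig ((?W @ [?v1]) ! (outs ! (g_wires g ! j))) (a - 1) = lab_val (xv g bits) (elab g i)"
        using OUT w old LVar by (simp add: xv_def)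
      show ?thesis unfolding n2 A_def
        by (subst val_gid[OF am(1) a(2)]) (use lastW mv wv on am(2) in \<open>simp add: A_def modstep2\<close>)
    next
      case (LConst c)
      have n2: "n2 = CGate (gid M (a - 1)) [?base, ?base + 1, widx off g (etgt g i)]"
        using st on LConst by (simp add: estep_def Let_def)
      have n1: "n1 = CConst (cst L (a - 1) c)"
        using st on LConst by (simp add: estep_def Let_def)
      have mv: "dig ((?W @ [?v1]) ! (?base + 1)) (a - 1) = lab_val (xv g bits) (elab g i)"
        using v1 n1 LConst am by (simp add: dig_cst)
      show ?thesis unfolding n2 A_def
        by (subst val_gid[OF am(1) a(2)]) (use lastW mv wv on am(2) in \<open>simp add: A_def modstep2\<close>)
    qed
  next
    case off: False
    have n2: "n2 = CGate (gid M (a - 1)) [?base, ?base + 1, ?base + 1]"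
      using st off by (simp add: estep_def Let_def)
    have n1: "n1 = CConst (cst L (a - 1) 0)"
      using st off by (simp add: estep_def Let_def)
    have mv: "dig ((?W @ [?v1]) ! (?base + 1)) (a - 1) = 0"
      using v1 n1 am by (simp add: dig_cst)
    show ?thesis unfolding n2 A_def
      by (subst val_gid[OF am(1) a(2)]) (use lastW mv off am(2) in \<open>simp add: A_def\<close>)
  qed
  have l: "last (cvals A inp V0 (vpart L M a outs g off r (Suc i))) = cnode_val A inp (?W @ [?v1]) n2"
    by (simp only: cv last_appendR list.distinct(1) last.simps) simp
  let ?X = "(if r = 0 then 1 else 0) + (\<Sum>i'<i. if esrc g i' = ?u
          then lab_val (xv g bits) (elab g i') * PS g bits (etgt g i') else 0)"
  let ?t = "if esrc g i = ?u then lab_val (xv g bits) (elab g i) * PS g bits (etgt g i) else 0"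
  have "dig (last (cvals A inp V0 (vpart L M a outs g off r (Suc i)))) a = (?X mod int M + ?t) mod int M"
    by (simp only: l key IH)
  also have "\<dots> = (?X + ?t) mod int M" by (rule mod_add_left_eq)
  also have "?X + ?t = (if r = 0 then 1 else 0) + (\<Sum>i'<Suc i. if esrc g i' = ?u
          then lab_val (xv g bits) (elab g i') * PS g bits (etgt g i') else 0)"
    by (simp only: sum.lessThan_Suc add.assoc)
  finally show ?case .
qed


definition vblocks :: "nat \<Rightarrow> nat \<Rightarrow> nat \<Rightarrow> nat list \<Rightarrow> babp_gate \<Rightarrow> nat \<Rightarrow> nat \<Rightarrow> nat cnode list" where
  "vblocks L M a outs g off R = concat (map (\<lambda>r. vpart L M a outs g off r (length (g_E g))) [0..<R])"

lemma vblocks_len: "length (vblocks L M a outs g off R) = R * Bsz g"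
  unfolding vblocks_def by (simp add: concat_len vpart_len Bsz_def)

lemma vblocks_Suc: "vblocks L M a outs g off (Suc R) = vblocks L M a outs g off R @ vpart L M a outs g off R (length (g_E g))"
  unfolding vblocks_def by simp

lemma snoc_nth_old: "j < length W \<Longrightarrow> cvals A inp W xs ! j = W ! j"
  by (rule cvals_nth_old)

lemma last_nth_len: "length W = Suc n \<Longrightarrow> W ! n = last W"
  by (metis diff_Suc_1 last_conv_nth list.size(3) nat.distinct(1))

lemma vblocks_correct:
  fixes L M :: nat and inp V0 bits outs
  assumes M: "2 \<le> M" and a: "1 \<le> a" "a < L"
    and wf: "gate_wf p (length bits) g" and lo: "length outs = length bits"
    and OUT: "\<forall>w<length bits. outs ! w < length V0 \<and> dig (V0 ! (outs ! w)) (a - 1) = (if bits ! w then 1 else 0)"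
    and len: "length V0 = off + 1"
  shows "R \<le> g_nv g \<Longrightarrow> length (cvals (Alg L M) inp V0 (vblocks L M a outs g off R)) = off + 1 + R * Bsz g \<and>
     (\<forall>v. g_nv g - R \<le> v \<and> v < g_nv g \<longrightarrow> dig (cvals (Alg L M) inp V0 (vblocks L M a outs g off R) ! widx off g v) a = PS g bits v mod int M)"
proof (induction R)
  case 0
  show ?case using len by (simp add: vblocks_def)
next
  case (Suc R)
  let ?V = "cvals (Alg L M) inp V0 (vblocks L M a outs g off R)"
  let ?V' = "cvals (Alg L M) inp ?V (vpart L M a outs g off R (length (g_E g)))"
  have R: "R < g_nv g" using Suc.prems by simp
  have IH: "length ?V = off + 1 + R * Bsz g"
     "\<forall>v. g_nv g - R \<le> v \<and> v < g_nv g \<longrightarrow> dig (?V ! widx off g v) a = PS g bits v mod int M"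
    using Suc R by auto
  have eq: "cvals (Alg L M) inp V0 (vblocks L M a outs g off (Suc R)) = ?V'"
    by (simp only: vblocks_Suc cvals_append)
  have lV': "length ?V' = off + 1 + Suc R * Bsz g"
    using IH(1) by (simp add: vpart_len Bsz_def)
  have OUT': "\<forall>w<length bits. outs ! w < length ?V \<and> dig (?V ! (outs ! w)) (a - 1) = (if bits ! w then 1 else 0)"
  proof (intro allI impI)
    fix w assume w: "w < length bits"
    then have "outs ! w < length V0" using OUT by blast
    then show "outs ! w < length ?V \<and> dig (?V ! (outs ! w)) (a - 1) = (if bits ! w then 1 else 0)"
      using OUT w cvals_nth_old[of "outs ! w" V0] by (simp add: trans_less_add1)
  qed
  have WH: "\<forall>v. g_nv g - 1 - R < v \<and> v < g_nv g \<longrightarrow> dig (?V ! widx off g v) a = PS g bits v mod int M"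
    using IH(2) by auto
  have VC: "dig (last ?V') a =
     ((if R = 0 then 1 else 0) + (\<Sum>i'<length (g_E g). if esrc g i' = g_nv g - 1 - R
          then lab_val (xv g bits) (elab g i') * PS g bits (etgt g i') else 0)) mod int M"
    using vpart_correct[OF M a wf lo OUT' IH(1) R WH, of "length (g_E g)" inp] by simp
  have ac: "acyc (g_E g)" using gwf_facts[OF wf] by simp
  have "PS g bits (g_nv g - 1 - R) = (if R = 0 then 1 else 0) + (\<Sum>i'<length (g_E g). if esrc g i' = g_nv g - 1 - R
          then lab_val (xv g bits) (elab g i') * PS g bits (etgt g i') else 0)"
  proof -
    have "(g_nv g - 1 - R = g_nv g - 1) = (R = 0)" using R by auto
    then show ?thesis unfolding PS_def esrc_def elab_def etgt_def by (subst psum_rec[OF ac]) simp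
  qed
  then have VC': "dig (last ?V') a = PS g bits (g_nv g - 1 - R) mod int M" using VC by simp
  have widxR: "widx off g (g_nv g - 1 - R) = off + 1 + R * Bsz g + 2 * length (g_E g)"
    unfolding widx_def using R by simp
  have "length ?V' = Suc (widx off g (g_nv g - 1 - R))" using lV' widxR by (simp add: Bsz_def)
  then have lastv: "?V' ! widx off g (g_nv g - 1 - R) = last ?V'" by (rule last_nth_len)
  have "\<forall>v. g_nv g - Suc R \<le> v \<and> v < g_nv g \<longrightarrow> dig (?V' ! widx off g v) a = PS g bits v mod int M"
  proof (intro allI impI)
    fix v assume v: "g_nv g - Suc R \<le> v \<and> v < g_nv g"
    show "dig (?V' ! widx off g v) a = PS g bits v mod int M"
    proof (cases "v = g_nv g - 1 - R")
      case True
      then show ?thesis using lastv VC' by simp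
    next
      case False
      then have v2: "g_nv g - 1 - R < v" using v by linarith
      have "widx off g v < length ?V" using widx_lt[OF v2 _ R] v IH(1) by simp
      then have "?V' ! widx off g v = ?V ! widx off g v" by (rule cvals_nth_old)
      then show ?thesis using IH(2) v v2 by simp
    qed
  qed
  then show ?case using eq lV' by simp
qed

definition Tl :: "babp_gate \<Rightarrow> int list" where "Tl g = sorted_list_of_set (g_T g)"
definition T0 :: "babp_gate \<Rightarrow> nat \<Rightarrow> nat" where "T0 g off = off + 1 + g_nv g * Bsz g"

definition tstep :: "nat \<Rightarrow> nat \<Rightarrow> nat \<Rightarrow> nat \<Rightarrow> babp_gate \<Rightarrow> nat \<Rightarrow> nat \<Rightarrow> nat cnode list" where
  "tstep L M a p g off s = (let base = T0 g off + 2 + 3 * s in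
    [CConst (cst L a (Tl g ! s)), CGate 0 [widx off g 0, base, off], CGate (gtest M a p) [base - 1, base + 1, T0 g off]])"

definition tpart :: "nat \<Rightarrow> nat \<Rightarrow> nat \<Rightarrow> nat \<Rightarrow> babp_gate \<Rightarrow> nat \<Rightarrow> nat \<Rightarrow> nat cnode list" where
  "tpart L M a p g off s = CConst (cst L (Suc a) 1) # CConst (zero L) # concat (map (tstep L M a p g off) [0..<s])"

lemma tstep_len[simp]: "length (tstep L M a p g off s) = 3" by (simp add: tstep_def Let_def)

lemma tpart_len: "length (tpart L M a p g off s) = 2 + 3 * s"
  unfolding tpart_def by (simp add: concat_len)

lemma tpart_Suc: "tpart L M a p g off (Suc s) = tpart L M a p g off s @ tstep L M a p g off s"
  unfolding tpart_def by simp

lemma modp_lemma: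
  assumes "int p dvd int M" "0 \<le> t" "t < int p"
  shows "(((X::int) mod int M - t) mod int M) mod int p = 0 \<longleftrightarrow> X mod int p = t"
proof -
  have "((X mod int M - t) mod int M) mod int p = (X mod int M - t) mod int p" by (rule mod_mod_cancel[OF assms(1)])
  also have "\<dots> = ((X mod int M) mod int p - t) mod int p" by (simp add: mod_diff_left_eq)
  also have "\<dots> = (X mod int p - t) mod int p" by (simp add: mod_mod_cancel[OF assms(1)])
  also have "\<dots> = (X - t) mod int p" by (simp add: mod_diff_left_eq)
  finally have e: "((X mod int M - t) mod int M) mod int p = (X - t) mod int p" .
  have "(X - t) mod int p = 0 \<longleftrightarrow> X mod int p = t mod int p"
    by (simp add: mod_eq_dvd_iff dvd_eq_mod_eq_0)
  also have "t mod int p = t" using assms(2,3) by simp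
  finally show ?thesis using e by simp
qed

lemma sum_distinct_ind: "distinct xs \<Longrightarrow> (\<Sum>s<length xs. if v = xs ! s then 1 else 0 :: int) = (if v \<in> set xs then 1 else 0)"
proof -
  assume d: "distinct xs"
  have "(\<Sum>s<length xs. if v = xs ! s then 1 else 0 :: int) = sum_list (map (\<lambda>t. if v = t then 1 else 0) xs)"
    by (simp add: sum_list_sum_nth atLeast0LessThan)
  also have "\<dots> = (if v \<in> set xs then 1 else 0)" using d by (induction xs) auto
  finally show ?thesis .
qed


lemma cvals3: "cvals A inp U [n1, n2, n3] = U @ [cnode_val A inp U n1, cnode_val A inp (U @ [cnode_val A inp U n1]) n2,
   cnode_val A inp (U @ [cnode_val A inp U n1, cnode_val A inp (U @ [cnode_val A inp U n1]) n2]) n3]"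
  by simp

lemma tpart_correct:
  fixes L M :: nat and inp VT
  assumes M: "2 \<le> M" and a: "Suc a < L" and pM: "int p dvd int M"
    and ts: "\<forall>s < length (Tl g). 0 \<le> Tl g ! s \<and> Tl g ! s < int p"
    and lVT: "length VT = T0 g off" and w0: "widx off g 0 < T0 g off" and offl: "off < T0 g off"
    and dw0: "dig (VT ! widx off g 0) a = P mod int M" and doff: "dig (VT ! off) a = 0"
  shows "s \<le> length (Tl g) \<Longrightarrow> length (cvals (Alg L M) inp VT (tpart L M a p g off s)) = T0 g off + 2 + 3 * s \<and>
     dig (last (cvals (Alg L M) inp VT (tpart L M a p g off s))) (Suc a) =
       (\<Sum>s'<s. if P mod int p = Tl g ! s' then 1 else 0) mod int M"
proof (induction s)
  case 0
  show ?case using lVT a by (simp add: tpart_def dig_zero)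
next
  case (Suc s)
  let ?U = "cvals (Alg L M) inp VT (tpart L M a p g off s)"
  let ?base = "T0 g off + 2 + 3 * s"
  have s: "s < length (Tl g)" using Suc.prems by simp
  have IH: "length ?U = ?base" "dig (last ?U) (Suc a) = (\<Sum>s'<s. if P mod int p = Tl g ! s' then 1 else 0) mod int M"
    using Suc s by auto
  have tT0: "?U ! T0 g off = cst L (Suc a) 1"
  proof -
    have "tpart L M a p g off s = [CConst (cst L (Suc a) 1), CConst (zero L)] @ concat (map (tstep L M a p g off) [0..<s])"
      by (simp add: tpart_def)
    then have "?U = cvals (Alg L M) inp (VT @ [cst L (Suc a) 1, zero L]) (concat (map (tstep L M a p g off) [0..<s]))"
      by (simp only: cvals_append) simp
    moreover have "T0 g off < length (VT @ [cst L (Suc a) 1, zero L])" using lVT by simp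
    ultimately have "?U ! T0 g off = (VT @ [cst L (Suc a) 1, zero L]) ! T0 g off"
      by (simp only: cvals_nth_old)
    then show ?thesis using lVT nth_append_length by metis
  qed
  have oldU: "?U ! j = VT ! j" if "j < length VT" for j using that by (rule cvals_nth_old)
  let ?x1 = "cst L a (Tl g ! s)"
  let ?n2 = "CGate 0 [widx off g 0, ?base, off] :: nat cnode"
  let ?n3 = "CGate (gtest M a p) [?base - 1, ?base + 1, T0 g off] :: nat cnode"
  have st: "tstep L M a p g off s = [CConst ?x1, ?n2, ?n3]" by (simp add: tstep_def Let_def)
  let ?x2 = "cnode_val (Alg L M) inp (?U @ [?x1]) ?n2"
  let ?x3 = "cnode_val (Alg L M) inp (?U @ [?x1, ?x2]) ?n3"
  have cv: "cvals (Alg L M) inp VT (tpart L M a p g off (Suc s)) = ?U @ [?x1, ?x2, ?x3]"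
    by (simp only: tpart_Suc cvals_append st cvals3) simp
  have al: "a < L" using a by simp
  have pl: "p \<le> M" using pM M by (simp add: dvd_imp_le)
  have i1: "(?U @ [?x1]) ! widx off g 0 = VT ! widx off g 0"
    using w0 lVT IH(1) oldU[of "widx off g 0"] by (simp add: nth_append_left)
  have i2: "(?U @ [?x1]) ! ?base = ?x1" using IH(1) by (metis nth_append_length)
  have i3: "(?U @ [?x1]) ! off = VT ! off"
    using offl lVT IH(1) oldU[of off] by (simp add: nth_append_left)
  have dx2: "dig ?x2 a = (P mod int M - Tl g ! s) mod int M"
    using val_d[OF al, of M inp "?U @ [?x1]" "widx off g 0" ?base off] i1 i2 i3 dw0 doff al
    by (simp add: dig_cst)
  have j1: "(?U @ [?x1, ?x2]) ! (?base - 1) = last ?U"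
  proof -
    have "?U \<noteq> []"
    proof
      assume "?U = []"
      then have "length ?U = 0" by (simp only: list.size)
      with IH(1) show False by linarith
    qed
    then have "last ?U = ?U ! (?base - 1)" using IH(1) by (simp add: last_conv_nth)
    moreover have "?base - 1 < length ?U" using IH(1) by simp
    ultimately show ?thesis by (simp add: nth_append_left)
  qed
  have j2: "(?U @ [?x1, ?x2]) ! (?base + 1) = ?x2"
    using nth_append_length_plus[of ?U "[?x1, ?x2]" 1] IH(1) by simp
  have j3: "(?U @ [?x1, ?x2]) ! T0 g off = cst L (Suc a) 1"
    using tT0 IH(1) by (simp add: nth_append_left)
  have dx3: "dig ?x3 (Suc a) = (dig (last ?U) (Suc a) + (if P mod int p = Tl g ! s then 1 else 0)) mod int M"
  proof -
    have "dig ?x3 (Suc a) = (dig (last ?U) (Suc a) + (if dig ?x2 a mod int p = 0 then 1 else 0) * 1) mod int M"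
      using val_gtest[OF al pl a, of inp "?U @ [?x1, ?x2]" "?base - 1" "?base + 1" "T0 g off"] j1 j2 j3 a
      by (simp add: dig_cst)
    moreover have "(dig ?x2 a mod int p = 0) = (P mod int p = Tl g ! s)"
      using dx2 modp_lemma[OF pM] ts s by simp
    ultimately show ?thesis by simp
  qed
  have "dig (last (cvals (Alg L M) inp VT (tpart L M a p g off (Suc s)))) (Suc a) = dig ?x3 (Suc a)"
    by (simp only: cv) simp
  also have "\<dots> = (\<Sum>s'<Suc s. if P mod int p = Tl g ! s' then 1 else 0) mod int M"
    using dx3 IH(2) by (simp add: mod_add_left_eq)
  finally show ?case using cv IH(1) by simp
qed


definition gblock :: "nat \<Rightarrow> nat \<Rightarrow> nat \<Rightarrow> nat \<Rightarrow> nat list \<Rightarrow> babp_gate \<Rightarrow> nat \<Rightarrow> nat cnode list" where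
  "gblock L M a p outs g off = CConst (zero L) # vblocks L M a outs g off (g_nv g) @ tpart L M a p g off (length (Tl g))"

definition glen :: "babp_gate \<Rightarrow> nat" where
  "glen g = 3 + g_nv g * Bsz g + 3 * length (Tl g)"

lemma gblock_len: "length (gblock L M a p outs g off) = glen g"
  unfolding gblock_def glen_def by (simp add: vblocks_len tpart_len)

lemma Tl_facts:
  assumes "gate_wf p nb g"
  shows "distinct (Tl g)" "set (Tl g) = g_T g" "\<forall>s < length (Tl g). 0 \<le> Tl g ! s \<and> Tl g ! s < int p"
proof -
  have T: "g_T g \<subseteq> {0..<int p}" using assms unfolding gate_wf_def by simp
  then have f: "finite (g_T g)" by (rule finite_subset) simp
  show "distinct (Tl g)" "set (Tl g) = g_T g" unfolding Tl_def using f by auto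
  then show "\<forall>s < length (Tl g). 0 \<le> Tl g ! s \<and> Tl g ! s < int p" using T by (auto dest!: nth_mem)
qed

lemma gblock_correct:
  fixes L M :: nat and inp acc bits outs
  assumes M: "2 \<le> M" and a: "1 \<le> a" "Suc a < L" and pM: "int p dvd int M"
    and wf: "gate_wf p (length bits) g" and lo: "length outs = length bits"
    and lacc: "length acc = off"
    and OUT: "\<forall>w<length bits. outs ! w < off \<and> dig (acc ! (outs ! w)) (a - 1) = (if bits ! w then 1 else 0)"
  shows "length (cvals (Alg L M) inp acc (gblock L M a p outs g off)) = off + glen g \<and>
     dig (last (cvals (Alg L M) inp acc (gblock L M a p outs g off))) (Suc a) = (if gate_out p g bits then 1 else 0)"
proof -
  let ?V0 = "acc @ [zero L]"
  have c0: "cvals (Alg L M) inp acc [CConst (zero L)] = ?V0" by simp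
  let ?VT = "cvals (Alg L M) inp ?V0 (vblocks L M a outs g off (g_nv g))"
  have eq: "cvals (Alg L M) inp acc (gblock L M a p outs g off) = cvals (Alg L M) inp ?VT (tpart L M a p g off (length (Tl g)))"
  proof -
    have "gblock L M a p outs g off = [CConst (zero L)] @ vblocks L M a outs g off (g_nv g) @ tpart L M a p g off (length (Tl g))"
      by (simp add: gblock_def)
    then show ?thesis by (simp only: cvals_append c0)
  qed
  have al: "a < L" using a by simp
  have OUT0: "\<forall>w<length bits. outs ! w < length ?V0 \<and> dig (?V0 ! (outs ! w)) (a - 1) = (if bits ! w then 1 else 0)"
    using OUT lacc by (simp add: nth_append_left less_SucI)
  have l0: "length ?V0 = off + 1" using lacc by simp
  have nv: "1 \<le> g_nv g" using gwf_facts(1)[OF wf] unfolding abp_wf_def by simp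
  from vblocks_correct[OF M a(1) al wf lo OUT0 l0, of "g_nv g" inp]
  have VT: "length ?VT = off + 1 + g_nv g * Bsz g"
    "\<forall>v. v < g_nv g \<longrightarrow> dig (?VT ! widx off g v) a = PS g bits v mod int M" by auto
  have lVT: "length ?VT = T0 g off" using VT(1) by (simp add: T0_def)
  have w0: "widx off g 0 < T0 g off"
  proof -
    have "Suc (g_nv g - 1) * Bsz g = g_nv g * Bsz g" using nv by simp
    moreover have "(g_nv g - 1) * Bsz g + 2 * length (g_E g) < Suc (g_nv g - 1) * Bsz g" by (simp add: Bsz_def)
    ultimately show ?thesis unfolding widx_def T0_def diff_zero by linarith
  qed
  have offl: "off < T0 g off" unfolding T0_def by simp
  have dw0: "dig (?VT ! widx off g 0) a = PS g bits 0 mod int M" using VT(2) nv by simp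
  have doff: "dig (?VT ! off) a = 0"
  proof -
    have "?VT ! off = ?V0 ! off" using l0 by (simp add: cvals_nth_old)
    moreover have "?V0 ! off = zero L" using lacc by (metis nth_append_length)
    ultimately show ?thesis using al by (simp add: dig_zero)
  qed
  note TF = Tl_facts[OF wf]
  from tpart_correct[OF M a(2) pM TF(3) lVT w0 offl dw0 doff, of "length (Tl g)" inp]
  have TP: "length (cvals (Alg L M) inp ?VT (tpart L M a p g off (length (Tl g)))) = T0 g off + 2 + 3 * length (Tl g)"
     "dig (last (cvals (Alg L M) inp ?VT (tpart L M a p g off (length (Tl g))))) (Suc a) =
       (\<Sum>s'<length (Tl g). if PS g bits 0 mod int p = Tl g ! s' then 1 else 0) mod int M" by auto
  have "(\<Sum>s'<length (Tl g). if PS g bits 0 mod int p = Tl g ! s' then 1 else 0) = (if PS g bits 0 mod int p \<in> g_T g then 1 else (0::int))"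
    using sum_distinct_ind[OF TF(1)] TF(2) by simp
  moreover have "gate_out p g bits = (PS g bits 0 mod int p \<in> g_T g)"
    unfolding gate_out_def PS_def xv_def using abp_val_psum[OF gwf_facts(1)[OF wf]] by simp
  ultimately have "dig (last (cvals (Alg L M) inp ?VT (tpart L M a p g off (length (Tl g))))) (Suc a) = (if gate_out p g bits then 1 else 0)"
    using TP(2) M by simp
  then show ?thesis using eq TP(1) by (simp add: T0_def glen_def)
qed


fun layer_nodes :: "nat \<Rightarrow> nat \<Rightarrow> nat \<Rightarrow> nat \<Rightarrow> nat list \<Rightarrow> nat \<Rightarrow> babp_gate list \<Rightarrow> nat cnode list" where
  "layer_nodes L M a p outs off [] = []"
| "layer_nodes L M a p outs off (g # gs) = gblock L M a p outs g off @ layer_nodes L M a p outs (off + glen g) gs"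

fun louts :: "nat \<Rightarrow> babp_gate list \<Rightarrow> nat list" where
  "louts off [] = []"
| "louts off (g # gs) = (off + glen g - 1) # louts (off + glen g) gs"

lemma louts_len[simp]: "length (louts off gs) = length gs"
  by (induction gs arbitrary: off) auto

lemma layer_len: "length (layer_nodes L M a p outs off gs) = sum_list (map glen gs)"
  by (induction gs arbitrary: off) (auto simp: gblock_len)

lemma glen_pos: "glen g \<ge> 1" unfolding glen_def by simp

lemma layer_correct:
  fixes L M :: nat and inp bits outs
  assumes M: "2 \<le> M" and a: "1 \<le> a" "Suc a < L" and pM: "int p dvd int M"
    and lo: "length outs = length bits"
  shows "(\<forall>g\<in>set gs. gate_wf p (length bits) g) \<Longrightarrow> length acc = off \<Longrightarrow>
    (\<forall>w<length bits. outs ! w < off \<and> dig (acc ! (outs ! w)) (a - 1) = (if bits ! w then 1 else 0)) \<Longrightarrow>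
    (\<forall>q<length gs. louts off gs ! q < length (cvals (Alg L M) inp acc (layer_nodes L M a p outs off gs)) \<and>
       dig (cvals (Alg L M) inp acc (layer_nodes L M a p outs off gs) ! (louts off gs ! q)) (Suc a) =
         (if gate_out p (gs ! q) bits then 1 else 0))"
proof (induction gs arbitrary: acc off)
  case Nil then show ?case by simp
next
  case (Cons g gs)
  let ?V1 = "cvals (Alg L M) inp acc (gblock L M a p outs g off)"
  let ?V = "cvals (Alg L M) inp ?V1 (layer_nodes L M a p outs (off + glen g) gs)"
  have eq: "cvals (Alg L M) inp acc (layer_nodes L M a p outs off (g # gs)) = ?V"
    by (simp only: layer_nodes.simps cvals_append)
  have wf: "gate_wf p (length bits) g" using Cons.prems by simp
  from gblock_correct[OF M a pM wf lo Cons.prems(2,3), of inp]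
  have G: "length ?V1 = off + glen g" "dig (last ?V1) (Suc a) = (if gate_out p g bits then 1 else 0)" by auto
  have OUT1: "\<forall>w<length bits. outs ! w < off + glen g \<and> dig (?V1 ! (outs ! w)) (a - 1) = (if bits ! w then 1 else 0)"
  proof (intro allI impI)
    fix w assume w: "w < length bits"
    then have o: "outs ! w < off" using Cons.prems(3) by blast
    then have "?V1 ! (outs ! w) = acc ! (outs ! w)" using Cons.prems(2) by (simp add: cvals_nth_old)
    then show "outs ! w < off + glen g \<and> dig (?V1 ! (outs ! w)) (a - 1) = (if bits ! w then 1 else 0)"
      using o w Cons.prems(3) by (simp add: trans_less_add1)
  qed
  have IH: "\<forall>q<length gs. louts (off + glen g) gs ! q < length ?V \<and>
       dig (?V ! (louts (off + glen g) gs ! q)) (Suc a) = (if gate_out p (gs ! q) bits then 1 else 0)"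
    using Cons.IH[OF _ G(1) OUT1] Cons.prems(1) by simp
  have first: "off + glen g - 1 < length ?V \<and> dig (?V ! (off + glen g - 1)) (Suc a) = (if gate_out p g bits then 1 else 0)"
  proof -
    have l: "off + glen g - 1 < length ?V1" using G(1) glen_pos[of g] by linarith
    then have "?V ! (off + glen g - 1) = ?V1 ! (off + glen g - 1)" by (rule cvals_nth_old)
    moreover have "?V1 ! (off + glen g - 1) = last ?V1"
      using G(1) glen_pos[of g] by (metis last_nth_len Suc_diff_1 add_gr_0 less_le_trans zero_less_one)
    ultimately show ?thesis using G(2) l by simp
  qed
  show ?case
  proof (intro allI impI)
    fix q assume q: "q < length (g # gs)"
    show "louts off (g # gs) ! q < length (cvals (Alg L M) inp acc (layer_nodes L M a p outs off (g # gs))) \<and>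
       dig (cvals (Alg L M) inp acc (layer_nodes L M a p outs off (g # gs)) ! (louts off (g # gs) ! q)) (Suc a) =
         (if gate_out p ((g # gs) ! q) bits then 1 else 0)"
    proof (cases q)
      case 0 then show ?thesis using first eq by simp
    next
      case (Suc q') then show ?thesis using IH q eq by simp
    qed
  qed
qed

lemma layer_last:
  "gs \<noteq> [] \<Longrightarrow> last (louts off gs) = off + sum_list (map glen gs) - 1"
proof (induction gs arbitrary: off)
  case Nil then show ?case by simp
next
  case (Cons g gs)
  show ?case
  proof (cases "gs = []")
    case True then show ?thesis by simp
  next
    case False
    then have "sum_list (map glen gs) \<ge> 1" using glen_pos by (cases gs) (auto simp: trans_le_add1)
    moreover have "louts (off + glen g) gs \<noteq> []" using False by (metis louts_len length_0_conv)
    ultimately show ?thesis using Cons False by simp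
  qed
qed


fun build :: "nat \<Rightarrow> nat \<Rightarrow> nat \<Rightarrow> nat list \<Rightarrow> babp_gate list list \<Rightarrow> nat cnode list \<times> nat list" where
  "build L M n (p # ps) (Lay # Ls) =
     (let B = (if Ls = [] then (map CIn [0..<n], [0..<n]) else build L M n ps Ls)
      in (fst B @ layer_nodes L M (2 * length Ls + 1) p (snd B) (length (fst B)) Lay, louts (length (fst B)) Lay))"
| "build L M n _ _ = ([], [])"

lemma cvals_CIn: "cvals A inp acc (map CIn js) = acc @ map inp js"
  by (induction js arbitrary: acc) auto

lemma layers_eval_len: "layers_wf ps Ls n \<Longrightarrow> Ls \<noteq> [] \<Longrightarrow> length (layers_eval ps Ls x) = length (hd Ls)"
  by (cases ps; cases Ls) auto

lemma build_correct:
  fixes L M n :: nat and x :: "bool list" and inp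
  assumes M: "2 \<le> M" and lx: "length x = n"
    and inp: "inp = (\<lambda>i. cst L 0 (if x ! i then 1 else 0))"
  shows "layers_wf ps Ls n \<Longrightarrow> Ls \<noteq> [] \<Longrightarrow> 2 * length Ls < L \<Longrightarrow> (\<forall>p\<in>set ps. int p dvd int M) \<Longrightarrow>
    length (snd (build L M n ps Ls)) = length (hd Ls) \<and>
    (\<forall>q<length (snd (build L M n ps Ls)). snd (build L M n ps Ls) ! q < length (fst (build L M n ps Ls)) \<and>
       dig (cvals (Alg L M) inp [] (fst (build L M n ps Ls)) ! (snd (build L M n ps Ls) ! q)) (2 * length Ls) =
         (if layers_eval ps Ls x ! q then 1 else 0))"
proof (induction Ls arbitrary: ps)
  case Nil then show ?case by simp
next
  case (Cons Lay Ls)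
  obtain p ps' where ps: "ps = p # ps'" using Cons.prems(1) by (cases ps) auto
  have wfL: "\<forall>g\<in>set Lay. gate_wf p (if Ls = [] then n else length (hd Ls)) g" and wfr: "layers_wf ps' Ls n"
    using Cons.prems(1) ps by auto
  let ?B = "if Ls = [] then (map CIn [0..<n], [0..<n]) else build L M n ps' Ls"
  let ?bits = "if Ls = [] then x else layers_eval ps' Ls x"
  let ?acc = "cvals (Alg L M) inp [] (fst ?B)"
  have R: "build L M n ps (Lay # Ls) = (fst ?B @ layer_nodes L M (2 * length Ls + 1) p (snd ?B) (length (fst ?B)) Lay, louts (length (fst ?B)) Lay)"
    using ps by (simp add: Let_def)
  have lb: "length ?bits = (if Ls = [] then n else length (hd Ls))"
    using lx layers_eval_len[OF wfr] by auto
  have B: "length (snd ?B) = length ?bits \<and> (\<forall>w<length ?bits. snd ?B ! w < length ?acc \<and>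
       dig (?acc ! (snd ?B ! w)) (2 * length Ls) = (if ?bits ! w then 1 else 0))"
  proof (cases "Ls = []")
    case True
    have "?acc = map inp [0..<n]" using True cvals_CIn[of "Alg L M" inp "[]" "[0..<n]"] by simp
    then show ?thesis using True lx Cons.prems(3) by (simp add: inp dig_cst)
  next
    case False
    have "2 * length Ls < L" using Cons.prems(3) by simp
    moreover have "\<forall>p\<in>set ps'. int p dvd int M" using Cons.prems(4) ps by simp
    ultimately show ?thesis using Cons.IH[OF wfr False] False lb by simp
  qed
  have a: "1 \<le> 2 * length Ls + 1" "Suc (2 * length Ls + 1) < L" using Cons.prems(3) by auto
  have pM: "int p dvd int M" using Cons.prems(4) ps by simp
  have wfL': "\<forall>g\<in>set Lay. gate_wf p (length ?bits) g" using wfL lb by simp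
  have OUT: "\<forall>w<length ?bits. snd ?B ! w < length (fst ?B) \<and> dig (?acc ! (snd ?B ! w)) (2 * length Ls + 1 - 1) = (if ?bits ! w then 1 else 0)"
    using B by simp
  from layer_correct[OF M a pM, of "snd ?B" ?bits Lay ?acc "length (fst ?B)" inp] B wfL' OUT
  have LC: "\<forall>q<length Lay. louts (length (fst ?B)) Lay ! q < length (cvals (Alg L M) inp ?acc (layer_nodes L M (2 * length Ls + 1) p (snd ?B) (length (fst ?B)) Lay)) \<and>
       dig (cvals (Alg L M) inp ?acc (layer_nodes L M (2 * length Ls + 1) p (snd ?B) (length (fst ?B)) Lay) ! (louts (length (fst ?B)) Lay ! q)) (Suc (2 * length Ls + 1)) =
         (if gate_out p (Lay ! q) ?bits then 1 else 0)" by simp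
  have ev: "layers_eval ps (Lay # Ls) x ! q = gate_out p (Lay ! q) ?bits" if "q < length Lay" for q
    using that ps by simp
  show ?case
    unfolding R using LC ev by (simp add: cvals_append)
qed


definition nok :: "nat \<Rightarrow> nat \<Rightarrow> nat \<Rightarrow> nat \<Rightarrow> nat cnode \<Rightarrow> bool" where
  "nok L M n i nd = (case nd of CIn j \<Rightarrow> j < n | CConst c \<Rightarrow> c \<in> Car L M
      | CGate f cs \<Rightarrow> f < length (opsL L M) \<and> length cs = fst (opsL L M ! f) \<and> (\<forall>j\<in>set cs. j < i))"

definition bok :: "nat \<Rightarrow> nat \<Rightarrow> nat \<Rightarrow> nat \<Rightarrow> nat cnode list \<Rightarrow> bool" where
  "bok L M n off nds = (\<forall>i<length nds. nok L M n (off + i) (nds ! i))"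

lemma bok_append: "bok L M n off (xs @ ys) = (bok L M n off xs \<and> bok L M n (off + length xs) ys)"
proof
  assume h: "bok L M n off (xs @ ys)"
  have 1: "bok L M n off xs" unfolding bok_def
  proof (intro allI impI)
    fix i assume "i < length xs"
    then show "nok L M n (off + i) (xs ! i)" using h[unfolded bok_def, rule_format, of i] by (simp add: nth_append_left)
  qed
  have 2: "bok L M n (off + length xs) ys" unfolding bok_def
  proof (intro allI impI)
    fix i assume "i < length ys"
    then show "nok L M n (off + length xs + i) (ys ! i)" using h[unfolded bok_def, rule_format, of "length xs + i"]
      by (simp add: add.assoc)
  qed
  show "bok L M n off xs \<and> bok L M n (off + length xs) ys" using 1 2 by simp
next
  assume h: "bok L M n off xs \<and> bok L M n (off + length xs) ys"
  show "bok L M n off (xs @ ys)" unfolding bok_def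
  proof (intro allI impI)
    fix i assume i: "i < length (xs @ ys)"
    show "nok L M n (off + i) ((xs @ ys) ! i)"
    proof (cases "i < length xs")
      case True then show ?thesis using h unfolding bok_def by (simp add: nth_append_left)
    next
      case False
      then obtain k where k: "i = length xs + k" by (metis le_add_diff_inverse not_less)
      then have "k < length ys" using i by simp
      then show ?thesis using h k unfolding bok_def by (simp add: add.assoc)
    qed
  qed
qed

lemma bok_Cons: "bok L M n off (x # xs) = (nok L M n off x \<and> bok L M n (Suc off) xs)"
  using bok_append[of L M n off "[x]" xs] by (simp add: bok_def)

lemma bok_Nil[simp]: "bok L M n off []" by (simp add: bok_def)

lemma bok_concat: "(\<And>r. r < R \<Longrightarrow> length (f r) = B \<and> bok L M n (off + r * B) (f r)) \<Longrightarrow> bok L M n off (concat (map f [0..<R]))"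
proof (induction R)
  case 0 then show ?case by simp
next
  case (Suc R)
  have "length (concat (map f [0..<R])) = R * B" using Suc.prems by (simp add: concat_len)
  then show ?case using Suc by (simp add: bok_append)
qed

lemma nok_cst: "0 \<le> c \<Longrightarrow> c < int M \<Longrightarrow> nok L M n i (CConst (cst L k c))"
  unfolding nok_def using cst_Car by simp

lemma nok_gate: "f < length (opsL L M) \<Longrightarrow> a < i \<Longrightarrow> b < i \<Longrightarrow> c < i \<Longrightarrow> nok L M n i (CGate f [a, b, c])"
  unfolding nok_def using ops_arity by simp

lemma vblocks_ok:
  fixes L M :: nat and outs bits
  assumes M: "2 \<le> M" and a: "1 \<le> a" "a < L" and pM: "p \<le> M"
    and wf: "gate_wf p (length outs) g"
    and OUT: "\<forall>w<length outs. outs ! w < off"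
  shows "bok L M n (off + 1) (vblocks L M a outs g off (g_nv g))"
  unfolding vblocks_def
proof (rule bok_concat)
  fix r assume r: "r < g_nv g"
  have gw: "abp_wf p (g_nv g) (g_E g) (length (g_wires g))" "\<forall>w \<in> set (g_wires g). w < length outs"
    using gwf_facts[OF wf] by auto
  have gid: "gid M (a - 1) < length (opsL L M)" using ops_gid[of "a - 1" L M] a by simp
  have st: "bok L M n (off + 1 + r * Bsz g + 1 + 2 * i) (estep L M a outs g off r i)" if i: "i < length (g_E g)" for i
  proof -
    let ?base = "off + 1 + r * Bsz g + 2 * i"
    let ?u = "g_nv g - 1 - r"
    note ef = edge_facts[OF gw(1) i]
    obtain c1 m1 w1 where e: "estep L M a outs g off r i = [CConst (cst L (a - 1) c1), CGate (gid M (a - 1)) [?base, m1, w1]]"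
      and c1: "0 \<le> c1 \<and> c1 < int M" and m1: "m1 < ?base + 2" and w1: "w1 < ?base + 2"
    proof (cases "esrc g i = ?u")
      case on: True
      have tg: "?u < etgt g i" "etgt g i < g_nv g" using ef on unfolding esrc_def etgt_def by auto
      have wl: "widx off g (etgt g i) < ?base + 2" using widx_lt[OF tg r, of off] by linarith
      show ?thesis
      proof (cases "elab g i")
        case (LVar j)
        then have "j < length (g_wires g)" using ef(3) unfolding elab_def by blast
        then have "g_wires g ! j < length outs" using gw(2) by simp
        then have "outs ! (g_wires g ! j) < ?base + 2" using OUT by fastforce
        then show ?thesis using that[of 0 "outs ! (g_wires g ! j)" "widx off g (etgt g i)"] on LVar wl M
          by (simp add: estep_def Let_def)
      next
        case (LConst c)
        then have "0 \<le> c \<and> c < int p" using ef(4) unfolding elab_def by blast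
        then have "0 \<le> c \<and> c < int M" using pM by linarith
        then show ?thesis using that[of c "?base + 1" "widx off g (etgt g i)"] on LConst wl
          by (simp add: estep_def Let_def)
      qed
    next
      case False
      then show ?thesis using that[of 0 "?base + 1" "?base + 1"] M by (simp add: estep_def Let_def)
    qed
    have "?base + 1 = off + 1 + r * Bsz g + 1 + 2 * i" by simp
    then show ?thesis unfolding e bok_Cons using nok_cst[OF conjunct1[OF c1] conjunct2[OF c1]] nok_gate[OF gid _ m1 w1]
      by simp
  qed
  show "length (vpart L M a outs g off r (length (g_E g))) = Bsz g \<and>
         bok L M n (off + 1 + r * Bsz g) (vpart L M a outs g off r (length (g_E g)))"
  proof
    show "length (vpart L M a outs g off r (length (g_E g))) = Bsz g" by (simp add: vpart_len Bsz_def)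
    have c0: "nok L M n (off + 1 + r * Bsz g) (CConst (cst L a (if r = 0 then 1 else 0)))"
      using M by (intro nok_cst) auto
    have "bok L M n (Suc (off + 1 + r * Bsz g)) (concat (map (estep L M a outs g off r) [0..<length (g_E g)]))"
      by (rule bok_concat[where B=2]) (use st in \<open>simp add: add.assoc mult.commute\<close>)
    then show "bok L M n (off + 1 + r * Bsz g) (vpart L M a outs g off r (length (g_E g)))"
      unfolding vpart_def bok_Cons using c0 by simp
  qed
qed


lemma tpart_ok:
  fixes L M :: nat
  assumes M: "2 \<le> M" and a: "Suc a < L" and pM: "p \<le> M" and p: "0 < p"
    and wf: "gate_wf p nb g"
  shows "bok L M n (T0 g off) (tpart L M a p g off (length (Tl g)))"
proof -
  have nv: "1 \<le> g_nv g" using gwf_facts(1)[OF wf] unfolding abp_wf_def by simp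
  have w0: "widx off g 0 < T0 g off"
  proof -
    have "Suc (g_nv g - 1) * Bsz g = g_nv g * Bsz g" using nv by simp
    moreover have "(g_nv g - 1) * Bsz g + 2 * length (g_E g) < Suc (g_nv g - 1) * Bsz g" by (simp add: Bsz_def)
    ultimately show ?thesis unfolding widx_def T0_def diff_zero by linarith
  qed
  have offl: "off < T0 g off" unfolding T0_def by simp
  note TF = Tl_facts[OF wf]
  have gt: "gtest M a p < length (opsL L M)" using ops_gtest[of a L p M] a pM by simp
  have d0: "0 < length (opsL L M)" by (simp add: opsL_def)
  have st: "bok L M n (T0 g off + 2 + s * 3) (tstep L M a p g off s)" if s: "s < length (Tl g)" for s
  proof -
    let ?base = "T0 g off + 2 + 3 * s"
    have t: "0 \<le> Tl g ! s \<and> Tl g ! s < int M" using TF(3) s pM by force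
    have "bok L M n ?base (tstep L M a p g off s)"
      unfolding tstep_def Let_def bok_Cons
      using nok_cst[OF conjunct1[OF t] conjunct2[OF t]]
        nok_gate[OF d0, of "widx off g 0" "Suc ?base" ?base off] w0 offl
        nok_gate[OF gt, of "?base - 1" "Suc (Suc ?base)" "?base + 1" "T0 g off"]
      by simp
    then show ?thesis by (simp add: mult.commute)
  qed
  have c: "bok L M n (Suc (Suc (T0 g off))) (concat (map (tstep L M a p g off) [0..<length (Tl g)]))"
    by (rule bok_concat[where B=3]) (use st in \<open>simp add: add.assoc\<close>)
  show ?thesis unfolding tpart_def bok_Cons
    using c M nok_cst[of 1 M L n "T0 g off" "Suc a"] unfolding nok_def
    by (simp add: zero_Car)
qed

lemma gblock_ok:
  fixes L M :: nat and outs
  assumes M: "2 \<le> M" and a: "1 \<le> a" "Suc a < L" and pM: "p \<le> M" and p: "0 < p"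
    and wf: "gate_wf p (length outs) g"
    and OUT: "\<forall>w<length outs. outs ! w < off"
  shows "bok L M n off (gblock L M a p outs g off)"
proof -
  have v: "bok L M n (off + 1) (vblocks L M a outs g off (g_nv g))"
    using vblocks_ok[OF M a(1) _ pM wf OUT] a by simp
  have t: "bok L M n (T0 g off) (tpart L M a p g off (length (Tl g)))"
    using tpart_ok[OF M a(2) pM p wf] .
  have z: "nok L M n off (CConst (zero L))" unfolding nok_def using M zero_Car by simp
  show ?thesis unfolding gblock_def bok_Cons bok_append
    using v t z by (simp add: vblocks_len T0_def)
qed

lemma layer_ok:
  fixes L M :: nat and outs
  assumes M: "2 \<le> M" and a: "1 \<le> a" "Suc a < L" and pM: "p \<le> M" and p: "0 < p"
  shows "(\<forall>g\<in>set gs. gate_wf p (length outs) g) \<Longrightarrow> (\<forall>w<length outs. outs ! w < off) \<Longrightarrow>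
     bok L M n off (layer_nodes L M a p outs off gs)"
proof (induction gs arbitrary: off)
  case Nil then show ?case by simp
next
  case (Cons g gs)
  have "bok L M n off (gblock L M a p outs g off)" using gblock_ok[OF M a pM p] Cons.prems by simp
  moreover have "bok L M n (off + glen g) (layer_nodes L M a p outs (off + glen g) gs)"
    using Cons.IH Cons.prems by (simp add: trans_less_add1)
  ultimately show ?case by (simp add: bok_append gblock_len)
qed

lemma louts_lt: "\<forall>q<length gs. louts off gs ! q < off + sum_list (map glen gs)"
proof (induction gs arbitrary: off)
  case Nil then show ?case by simp
next
  case (Cons g gs)
  show ?case
  proof (intro allI impI)
    fix q assume q: "q < length (g # gs)"
    show "louts off (g # gs) ! q < off + sum_list (map glen (g # gs))"
    proof (cases q)
      case 0 then show ?thesis using glen_pos[of g] by simp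
    next
      case (Suc q')
      then have "louts (off + glen g) gs ! q' < off + glen g + sum_list (map glen gs)"
        using Cons.IH[of "off + glen g"] q by simp
      then show ?thesis using Suc by (simp add: add.assoc)
    qed
  qed
qed

lemma build_ok:
  fixes L M n :: nat
  assumes M: "2 \<le> M"
  shows "layers_wf ps Ls n \<Longrightarrow> Ls \<noteq> [] \<Longrightarrow> 2 * length Ls < L \<Longrightarrow> (\<forall>p\<in>set ps. 0 < p \<and> p \<le> M) \<Longrightarrow>
    bok L M n 0 (fst (build L M n ps Ls)) \<and>
    length (fst (build L M n ps Ls)) = n + sum_list (map glen (concat Ls)) \<and>
    (\<forall>q<length (snd (build L M n ps Ls)). snd (build L M n ps Ls) ! q < length (fst (build L M n ps Ls))) \<and>
    length (snd (build L M n ps Ls)) = length (hd Ls)"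
proof (induction Ls arbitrary: ps)
  case Nil then show ?case by simp
next
  case (Cons Lay Ls)
  obtain p ps' where ps: "ps = p # ps'" using Cons.prems(1) by (cases ps) auto
  have wfL: "\<forall>g\<in>set Lay. gate_wf p (if Ls = [] then n else length (hd Ls)) g" and wfr: "layers_wf ps' Ls n"
    using Cons.prems(1) ps by auto
  let ?B = "if Ls = [] then (map CIn [0..<n], [0..<n]) else build L M n ps' Ls"
  have R: "build L M n ps (Lay # Ls) = (fst ?B @ layer_nodes L M (2 * length Ls + 1) p (snd ?B) (length (fst ?B)) Lay, louts (length (fst ?B)) Lay)"
    using ps by (simp add: Let_def)
  have B: "bok L M n 0 (fst ?B) \<and> length (fst ?B) = n + sum_list (map glen (concat Ls)) \<and>
     (\<forall>q<length (snd ?B). snd ?B ! q < length (fst ?B)) \<and> length (snd ?B) = (if Ls = [] then n else length (hd Ls))"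
  proof (cases "Ls = []")
    case True
    have "bok L M n 0 (map CIn [0..<n])" unfolding bok_def nok_def by simp
    then show ?thesis using True by simp
  next
    case False
    have h3: "2 * length Ls < L" using Cons.prems(3) by simp
    have h4: "\<forall>p\<in>set ps'. 0 < p \<and> p \<le> M" using Cons.prems(4) ps by simp
    from Cons.IH[OF wfr False h3 h4] False show ?thesis by auto
  qed
  have a: "1 \<le> 2 * length Ls + 1" "Suc (2 * length Ls + 1) < L" using Cons.prems(3) by auto
  have p: "0 < p" "p \<le> M" using Cons.prems(4) ps by auto
  have wfL': "\<forall>g\<in>set Lay. gate_wf p (length (snd ?B)) g" using wfL B by simp
  have B3: "\<forall>q<length (snd ?B). snd ?B ! q < length (fst ?B)" using B by blast
  have lay: "bok L M n (length (fst ?B)) (layer_nodes L M (2 * length Ls + 1) p (snd ?B) (length (fst ?B)) Lay)"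
    by (rule layer_ok[OF M a p(2) p(1) wfL' B3])
  show ?case unfolding R using B lay louts_lt[of Lay "length (fst ?B)"]
    by (simp add: bok_append layer_len)
qed


lemma bok_Car:
  assumes M: "M > 0" and inp: "\<forall>i. inp i \<in> Car L M"
  shows "bok L M n off C \<Longrightarrow> set acc \<subseteq> Car L M \<Longrightarrow> set (cvals (Alg L M) inp acc C) \<subseteq> Car L M"
proof (induction C arbitrary: acc off)
  case Nil then show ?case by simp
next
  case (Cons nd C)
  have nk: "nok L M n off nd" and b: "bok L M n (Suc off) C" using Cons.prems(1) by (auto simp: bok_Cons)
  have "cnode_val (Alg L M) inp acc nd \<in> Car L M"
  proof (cases nd)
    case (CIn j) then show ?thesis using inp by simp
  next
    case (CConst c) then show ?thesis using nk by (simp add: nok_def)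
  next
    case (CGate f cs)
    then have "f < length (opsL L M)" using nk by (simp add: nok_def)
    then have "opsL L M ! f \<in> set (opsL L M)" by simp
    then show ?thesis using CGate ops_closed[OF M, of "fst (opsL L M ! f)" "snd (opsL L M ! f)"] by (simp add: Alg_def)
  qed
  then show ?case using Cons.IH[OF b] Cons.prems(2) by simp
qed

lemma bok_edges: "bok L M n off C \<Longrightarrow> sum_list (map cnode_edges C) \<le> 3 * length C"
proof (induction C arbitrary: off)
  case Nil then show ?case by simp
next
  case (Cons nd C)
  have nk: "nok L M n off nd" and b: "bok L M n (Suc off) C" using Cons.prems(1) by (auto simp: bok_Cons)
  have "cnode_edges nd \<le> 3"
  proof (cases nd)
    case (CGate f cs) then show ?thesis using nk ops_arity[of f L M] by (simp add: nok_def)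
  qed auto
  then show ?case using Cons.IH[OF b] by simp
qed

lemma bok_wf: "bok L M n 0 C \<Longrightarrow> C \<noteq> [] \<Longrightarrow> wf_circ (Alg L M) n C"
  unfolding wf_circ_def
proof (intro conjI allI impI)
  fix i assume b: "bok L M n 0 C" and i: "i < length C"
  then have h: "nok L M n i (C ! i)" unfolding bok_def by simp
  show "case C ! i of CIn j \<Rightarrow> j < n | CConst c \<Rightarrow> c \<in> alg_carrier (Alg L M)
    | CGate f cs \<Rightarrow> f < length (alg_ops (Alg L M)) \<and> length cs = fst (alg_ops (Alg L M) ! f) \<and> (\<forall>j\<in>set cs. j < i)"
    using h by (cases "C ! i") (simp_all add: nok_def Alg_def)
qed

lemma build_last:
  "layers_wf ps Ls n \<Longrightarrow> Ls \<noteq> [] \<Longrightarrow> hd Ls \<noteq> [] \<Longrightarrow>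
   last (snd (build L M n ps Ls)) = length (fst (build L M n ps Ls)) - 1"
proof -
  assume w: "layers_wf ps Ls n" and ne: "Ls \<noteq> []" "hd Ls \<noteq> []"
  obtain Lay Ls' where Ls: "Ls = Lay # Ls'" using ne by (cases Ls) auto
  obtain p ps' where ps: "ps = p # ps'" using w Ls by (cases ps) auto
  let ?B = "if Ls' = [] then (map CIn [0..<n], [0..<n]) else build L M n ps' Ls'"
  have R: "build L M n ps Ls = (fst ?B @ layer_nodes L M (2 * length Ls' + 1) p (snd ?B) (length (fst ?B)) Lay, louts (length (fst ?B)) Lay)"
    using ps Ls by (simp add: Let_def)
  have "Lay \<noteq> []" using ne Ls by simp
  then show ?thesis unfolding R using layer_last[of Lay "length (fst ?B)"] by (simp add: layer_len)
qed

lemma dvd_prod_list_nat: "p \<in> set ps \<Longrightarrow> (p::nat) dvd prod_list ps"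
  by (induction ps) auto

lemma prod_primes_ge2: "ps \<noteq> [] \<Longrightarrow> \<forall>p\<in>set ps. prime p \<Longrightarrow> 2 \<le> prod_list (ps :: nat list)"
proof (induction ps)
  case Nil then show ?case by simp
next
  case (Cons q qs)
  have q: "2 \<le> q" using Cons.prems prime_ge_2_nat by simp
  show ?case
  proof (cases "qs = []")
    case True then show ?thesis using q by simp
  next
    case False
    then have "2 \<le> prod_list qs" using Cons by simp
    then show ?thesis using q by (simp add: order_trans[OF _ mult_le_mono[of 2 q 1 "prod_list qs"]])
  qed
qed

lemma gates_wf: "layers_wf ps Ls n \<Longrightarrow> \<forall>g\<in>set (concat Ls). \<exists>p nb. p \<in> set ps \<and> gate_wf p nb g"
proof (induction Ls arbitrary: ps)
  case Nil then show ?case by simp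
next
  case (Cons Lay Ls)
  then obtain p ps' where ps: "ps = p # ps'" by (cases ps) auto
  then show ?case using Cons by fastforce
qed

lemma glen_bound:
  assumes wf: "gate_wf p nb g" and pM: "p \<le> M"
  shows "glen g \<le> (5 + 3 * M) * ((length (g_wires g) + gate_size g) * (length (g_wires g) + gate_size g))"
proof -
  let ?s = "g_nv g + length (g_E g)"
  let ?x = "length (g_wires g) + gate_size g"
  have nv: "1 \<le> g_nv g" using gwf_facts(1)[OF wf] unfolding abp_wf_def by simp
  have s1: "1 \<le> ?s" using nv by simp
  have sx: "?s \<le> ?x" unfolding gate_size_def by simp
  have T: "g_T g \<subseteq> {0..<int p}" using wf unfolding gate_wf_def by simp
  have "length (Tl g) = card (g_T g)" using Tl_facts[OF wf] by (metis distinct_card)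
  also have "\<dots> \<le> card {0..<int p}" using T by (intro card_mono) auto
  also have "\<dots> = p" by simp
  finally have tl: "length (Tl g) \<le> M" using pM by simp
  have "g_nv g * Bsz g \<le> ?s * (2 * ?s)" unfolding Bsz_def
    using nv by (intro mult_le_mono) auto
  moreover have "?s * (2 * ?s) = 2 * (?s * ?s)" by simp
  ultimately have "glen g \<le> 3 + 2 * (?s * ?s) + 3 * M" unfolding glen_def using tl by linarith
  also have "\<dots> \<le> 3 * (?s * ?s) + 2 * (?s * ?s) + 3 * M * (?s * ?s)"
  proof -
    have "1 \<le> ?s * ?s" using s1 by simp
    then have "3 \<le> 3 * (?s * ?s)" "3 * M \<le> 3 * M * (?s * ?s)" by simp_all
    then show ?thesis by linarith
  qed
  also have "\<dots> = (5 + 3 * M) * (?s * ?s)" by (simp add: algebra_simps)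
  also have "\<dots> \<le> (5 + 3 * M) * (?x * ?x)" using sx by (intro mult_le_mono2 mult_le_mono) auto
  finally show ?thesis .
qed

lemma sum_sq_le: "sum_list (map (\<lambda>x. f x * f x) xs) \<le> sum_list (map f xs) * sum_list (map f xs)" for f :: "'a \<Rightarrow> nat"
proof (induction xs)
  case Nil then show ?case by simp
next
  case (Cons a xs)
  then show ?case by (simp add: algebra_simps)
qed

lemma layers_size_concat: "layers_size Ls = sum_list (map (\<lambda>g. length (g_wires g) + gate_size g) (concat Ls))"
  unfolding layers_size_def by (induction Ls) auto

lemma sum_glen_bound:
  assumes "\<forall>g\<in>set gs. \<exists>p nb. p \<le> M \<and> gate_wf p nb g"
  shows "sum_list (map glen gs) \<le> (5 + 3 * M) * (sum_list (map (\<lambda>g. length (g_wires g) + gate_size g) gs) * sum_list (map (\<lambda>g. length (g_wires g) + gate_size g) gs))"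
proof -
  let ?f = "\<lambda>g. length (g_wires g) + gate_size g"
  have "sum_list (map glen gs) \<le> sum_list (map (\<lambda>g. (5 + 3 * M) * (?f g * ?f g)) gs)"
    using assms glen_bound by (intro sum_list_mono) blast
  also have "\<dots> = (5 + 3 * M) * sum_list (map (\<lambda>g. ?f g * ?f g) gs)"
    by (simp add: sum_list_const_mult)
  also have "\<dots> \<le> (5 + 3 * M) * (sum_list (map ?f gs) * sum_list (map ?f gs))"
    using sum_sq_le[of ?f gs] by simp
  finally show ?thesis .
qed

lemma poly_arith:
  fixes n S c k K :: nat
  assumes n: "1 \<le> n" and S: "S \<le> c * n ^ k + c"
  shows "4 * (n + K * (S * S)) \<le> (4 + 16 * K * (c * c)) * n ^ (2 * k + 1) + (4 + 16 * K * (c * c))"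
proof -
  have nk: "1 \<le> n ^ k" using n by simp
  have "c * 1 \<le> c * n ^ k" using nk by (rule mult_le_mono2)
  then have "c \<le> c * n ^ k" by (simp only: mult_1_right)
  then have S2: "S \<le> 2 * c * n ^ k" using S by (simp only: mult_2 add_mult_distrib)
  have "S * S \<le> (2 * c * n ^ k) * (2 * c * n ^ k)" using S2 S2 by (rule mult_le_mono)
  also have "n ^ (2 * k) = n ^ k * n ^ k" by (simp add: mult_2 power_add)
  then have "(2 * c * n ^ k) * (2 * c * n ^ k) = 4 * (c * c) * n ^ (2 * k)" by (simp add: algebra_simps)
  finally have SS: "S * S \<le> 4 * (c * c) * n ^ (2 * k)" .
  have p1: "n ^ (2 * k) \<le> n ^ (2 * k + 1)" using n by (intro power_increasing) auto
  have p2: "n \<le> n ^ (2 * k + 1)" using n by (intro self_le_power) auto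
  have "K * (S * S) \<le> K * (4 * (c * c) * n ^ (2 * k))" using SS by (rule mult_le_mono2)
  also have "\<dots> \<le> K * (4 * (c * c) * n ^ (2 * k + 1))" using p1 by simp
  finally have KS: "K * (S * S) \<le> K * (4 * (c * c) * n ^ (2 * k + 1))" .
  have "n + K * (S * S) \<le> n ^ (2 * k + 1) + K * (4 * (c * c) * n ^ (2 * k + 1))" using p2 KS by (rule add_le_mono)
  then have "4 * (n + K * (S * S)) \<le> 4 * (n ^ (2 * k + 1) + K * (4 * (c * c) * n ^ (2 * k + 1)))" by (rule mult_le_mono2)
  also have "\<dots> = (4 + 16 * K * (c * c)) * n ^ (2 * k + 1)" by (simp add: algebra_simps)
  finally show ?thesis by simp
qed


lemma layers_wf_len: "layers_wf ps Ls n \<Longrightarrow> length Ls = length ps"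
proof (induction Ls arbitrary: ps)
  case Nil then show ?case by (cases ps) auto
next
  case (Cons a Ls) then show ?case by (cases ps) auto
qed

lemma hd_len1: "length xs = 1 \<Longrightarrow> hd xs = xs ! 0"
  by (cases xs) auto

lemma last_len1: "length xs = 1 \<Longrightarrow> last xs = xs ! 0"
  by (cases xs) auto

theorem mainTheorem10:
  fixes ps :: "nat list"
  assumes "\<forall>p \<in> set ps. prime p"
  shows "\<exists>A :: nat algebra. finite_algebra A \<and> solvable_alg A \<and> has_malcev A \<and>
           nuDet ps \<subseteq> nuP A"
proof -
  define L where "L = 2 * length ps + 1"
  define M where "M = prod_list ps"
  have pr: "\<forall>p\<in>set ps. 0 < p" using assms prime_gt_0_nat by blast
  have M0: "M > 0" unfolding M_def using pr by (induction ps) auto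
  have sub: "nuDet ps \<subseteq> nuP (Alg L M)"
  proof (cases "ps = []")
    case True
    have "nuDet ps = {}"
    proof -
      have "False" if "Lang \<in> nuDet ps" for Lang
      proof -
        from that obtain C :: "nat \<Rightarrow> babp_gate list list" where "C 0 \<noteq> [] \<and> layers_wf ps (C 0) 0"
          unfolding nuDet_def by blast
        then show False using True by (cases "C 0") auto
      qed
      then show ?thesis by blast
    qed
    then show ?thesis by simp
  next
    case False
    have M2: "2 \<le> M" unfolding M_def using prod_primes_ge2[OF False assms] .
    have pdvd: "\<forall>p\<in>set ps. int p dvd int M" unfolding M_def using dvd_prod_list_nat by auto
    have pM: "\<forall>p\<in>set ps. 0 < p \<and> p \<le> M"
      using pr dvd_prod_list_nat M0 unfolding M_def by (auto intro: dvd_imp_le)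
    show ?thesis
    proof
      fix Lang assume "Lang \<in> nuDet ps"
      then obtain C :: "nat \<Rightarrow> babp_gate list list" and c k where H: "\<forall>n. C n \<noteq> [] \<and> length (hd (C n)) = 1 \<and> layers_wf ps (C n) n \<and>
          layers_size (C n) \<le> c * n ^ k + c \<and>
          (\<forall>x. length x = n \<longrightarrow> (x \<in> Lang \<longleftrightarrow> hd (layers_eval ps (C n) x)))"
        unfolding nuDet_def by blast
      define K where "K = 5 + 3 * M"
      define c' where "c' = 4 + 16 * K * (c * c)"
      define t where "t = (\<lambda>n. fst (build L M n ps (C n)))"
      define \<iota> where "\<iota> = (\<lambda>b. cst L 0 (if b then 1 else 0))"
      define S where "S = {y \<in> Car L M. dig y (2 * length ps) = 1}"
      have lenC: "length (C n) = length ps" for n using layers_wf_len H by blast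
      have Lbig: "2 * length (C n) < L" for n using lenC L_def by simp
      have BO: "bok L M n 0 (fst (build L M n ps (C n))) \<and>
          length (fst (build L M n ps (C n))) = n + sum_list (map glen (concat (C n))) \<and>
          (\<forall>q<length (snd (build L M n ps (C n))). snd (build L M n ps (C n)) ! q < length (fst (build L M n ps (C n)))) \<and>
          length (snd (build L M n ps (C n))) = length (hd (C n))" for n
        using build_ok[OF M2, of ps "C n" n L] H Lbig pM by blast
      have range: "range \<iota> \<subseteq> alg_carrier (Alg L M)"
        using M2 cst_Car unfolding \<iota>_def by (auto simp: Alg_def)
      have Ssub: "S \<subseteq> alg_carrier (Alg L M)" unfolding S_def by (auto simp: Alg_def)
      have size: "wf_circ (Alg L M) n (t n) \<and> circ_size (t n) \<le> c' * n ^ (2 * k + 1) + c'" if n: "n \<ge> 1" for n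
      proof
        have ne: "t n \<noteq> []" using BO[of n] n unfolding t_def by auto
        show "wf_circ (Alg L M) n (t n)" using bok_wf BO ne unfolding t_def by blast
        have gw: "\<forall>g\<in>set (concat (C n)). \<exists>p nb. p \<le> M \<and> gate_wf p nb g"
          using gates_wf[of ps "C n" n] H pM by fastforce
        have "sum_list (map glen (concat (C n))) \<le> K * (layers_size (C n) * layers_size (C n))"
          using sum_glen_bound[OF gw] unfolding K_def layers_size_concat .
        then have len: "length (t n) \<le> n + K * (layers_size (C n) * layers_size (C n))"
          using BO[of n] unfolding t_def by simp
        have "circ_size (t n) \<le> 4 * length (t n)"
          using bok_edges[of L M n 0 "t n"] BO[of n] unfolding circ_size_def t_def by simp
        also have "\<dots> \<le> 4 * (n + K * (layers_size (C n) * layers_size (C n)))" using len by simp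
        also have "\<dots> \<le> c' * n ^ (2 * k + 1) + c'"
          unfolding c'_def using poly_arith[OF n, of "layers_size (C n)" c k K] H by blast
        finally show "circ_size (t n) \<le> c' * n ^ (2 * k + 1) + c'" .
      qed
      have acc: "b \<in> Lang \<longleftrightarrow> circ_eval (Alg L M) (\<lambda>i. \<iota> (b ! i)) (t (length b)) \<in> S"
        if b: "length b \<ge> 1" for b
      proof -
        let ?n = "length b"
        let ?R = "build L M ?n ps (C ?n)"
        let ?inp = "\<lambda>i. \<iota> (b ! i)"
        let ?V = "cvals (Alg L M) ?inp [] (fst ?R)"
        have inp: "?inp = (\<lambda>i. cst L 0 (if b ! i then 1 else 0))" unfolding \<iota>_def by simp
        have wf: "layers_wf ps (C ?n) ?n" and ne: "C ?n \<noteq> []" and h1: "length (hd (C ?n)) = 1" using H by auto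
        from build_correct[OF M2 refl inp wf ne Lbig pdvd]
        have BC: "length (snd ?R) = 1" "snd ?R ! 0 < length (fst ?R)"
          "dig (?V ! (snd ?R ! 0)) (2 * length (C ?n)) = (if layers_eval ps (C ?n) b ! 0 then 1 else 0)"
          using h1 by auto
        have hdne: "hd (C ?n) \<noteq> []" using h1 by auto
        have "last (snd ?R) = length (fst ?R) - 1" using build_last[OF wf ne hdne] .
        moreover have "last (snd ?R) = snd ?R ! 0" using BC(1) by (rule last_len1)
        ultimately have i0: "snd ?R ! 0 = length ?V - 1" by simp
        have lV: "length ?V = length (fst ?R)" by simp
        have Vne: "?V \<noteq> []"
        proof
          assume "?V = []"
          then have "length ?V = 0" by (simp only: list.size)
          then show False using lV BC(2) by linarith
        qed
        have lastV: "last ?V = ?V ! (snd ?R ! 0)" using i0 Vne by (simp add: last_conv_nth)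
        have inC: "\<forall>i. ?inp i \<in> Car L M" using range by (auto simp: Alg_def)
        have bk: "bok L M ?n 0 (fst ?R)" using BO[of ?n] by blast
        have "set ?V \<subseteq> Car L M" using bok_Car[OF M0 inC bk] by simp
        then have lC: "last ?V \<in> Car L M" using Vne by auto
        have "length (layers_eval ps (C ?n) b) = 1" using layers_eval_len[OF wf ne] h1 by simp
        then have hd: "hd (layers_eval ps (C ?n) b) = layers_eval ps (C ?n) b ! 0" by (rule hd_len1)
        have "b \<in> Lang \<longleftrightarrow> hd (layers_eval ps (C ?n) b)" using H by blast
        also have "\<dots> \<longleftrightarrow> dig (last ?V) (2 * length ps) = 1" using BC(3) lastV hd lenC by simp
        also have "\<dots> \<longleftrightarrow> last ?V \<in> S" using lC unfolding S_def by simp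
        finally show ?thesis unfolding circ_eval_def t_def .
      qed
      show "Lang \<in> nuP (Alg L M)" unfolding nuP_def
        using range Ssub size acc by blast
    qed
  qed
  show ?thesis
    using finite_Alg[OF M0] solvable_Alg[OF M0] malcev_Alg[OF M0] sub by blast
qed

end
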